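(* Let $p \geq 6$ and $q_1, q_2 \geq 2$ be integers and let $L$ be the Laplacian of the graph $C_{q_1} \oplus K_p \oplus C_{q_2}$. Then the spectrum of $L$ consists of the eigenvalue $p$ with multiplicity $p-3$, two eigenvalues $\lambda_1, \lambda_2 \in (p,p+2]$, and all other eigenvalues lie in the interval $[0,4]$.
   Context: For integers $p \geq 3$, $q_1,q_2 \geq 2$, the graph $C_{q_1} \oplus K_p \oplus C_{q_2}$ has vertex set $\{-q_1-p+2,\ldots,-p\} \cup \{-p+1,\ldots,0\} \cup \{1,\ldots,q_2-1\}$. Its edges are: every pair of distinct vertices in $\{-p+1,\ldots,0\}$, the edges $\{-p,-p+1\}$ and $\{0,1\}$, the edges $\{j,j+1\}$ for $-q_1-p+2 \leq j \leq -p-1$, and the edges $\{j,j+1\}$ for $1 \leq j \leq q_2-2$. The Laplacian $L$ is the matrix with $L_{ii}$ equal to the degree of $i$, $L_{ij}=-1$ if $i\neq j$ are adjacent and $0$ otherwise. *)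

theory Defs
  imports "Jordan_Normal_Form.Char_Poly" "HOL-Library.Multiset"
begin

text \<open>The graph C_q1 (+) K_p (+) C_q2 on the integer vertex set
  {-q1-p+2 .. q2-1}.\<close>

definition ckc_vertices :: "nat \<Rightarrow> nat \<Rightarrow> nat \<Rightarrow> int set" where
  "ckc_vertices p q1 q2 = {- int q1 - int p + 2 .. int q2 - 1}"

definition ckc_adj :: "nat \<Rightarrow> nat \<Rightarrow> nat \<Rightarrow> int \<Rightarrow> int \<Rightarrow> bool" where
  "ckc_adj p q1 q2 u v \<longleftrightarrow>
     u \<in> ckc_vertices p q1 q2 \<and> v \<in> ckc_vertices p q1 q2 \<and> u \<noteq> v \<and>
     ( (u \<in> {- int p + 1 .. 0} \<and> v \<in> {- int p + 1 .. 0})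
     \<or> {u, v} = {- int p, - int p + 1}
     \<or> {u, v} = {0, 1}
     \<or> (\<exists>j. - int q1 - int p + 2 \<le> j \<and> j \<le> - int p - 1 \<and> {u, v} = {j, j + 1})
     \<or> (\<exists>j. 1 \<le> j \<and> j \<le> int q2 - 2 \<and> {u, v} = {j, j + 1}))"

definition ckc_n :: "nat \<Rightarrow> nat \<Rightarrow> nat \<Rightarrow> nat" where
  "ckc_n p q1 q2 = p + q1 + q2 - 2"

definition ckc_vertex :: "nat \<Rightarrow> nat \<Rightarrow> nat \<Rightarrow> nat \<Rightarrow> int" where
  "ckc_vertex p q1 q2 i = int i - int q1 - int p + 2"

definition ckc_degree :: "nat \<Rightarrow> nat \<Rightarrow> nat \<Rightarrow> int \<Rightarrow> nat" where
  "ckc_degree p q1 q2 u = card {v \<in> ckc_vertices p q1 q2. ckc_adj p q1 q2 u v}"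

definition ckc_laplacian :: "nat \<Rightarrow> nat \<Rightarrow> nat \<Rightarrow> real mat" where
  "ckc_laplacian p q1 q2 = mat (ckc_n p q1 q2) (ckc_n p q1 q2) (\<lambda>(i, j).
     let u = ckc_vertex p q1 q2 i; v = ckc_vertex p q1 q2 j in
     if i = j then real (ckc_degree p q1 q2 u)
     else if ckc_adj p q1 q2 u v then -1 else 0)"

end

theory Submission
  imports Defs "Jordan_Normal_Form.Schur_Decomposition"
begin

lemma complex_eigen_real:
  fixes A :: "real mat"
  assumes A: "A \<in> carrier_mat n n" and sym: "transpose_mat A = A"
    and z: "z \<in> carrier_vec n" "z \<noteq> 0\<^sub>v n"
    and ev: "map_mat complex_of_real A *\<^sub>v z = l \<cdot>\<^sub>v z"
  shows "l \<in> \<real>"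
proof -
  have row: "(\<Sum>j<n. of_real (A $$ (i,j)) * z $ j) = l * z $ i" if i: "i < n" for i
  proof -
    have "(map_mat complex_of_real A *\<^sub>v z) $ i = l * z $ i" using ev i z by simp
    moreover have "(map_mat complex_of_real A *\<^sub>v z) $ i = (\<Sum>j<n. of_real (A $$ (i,j)) * z $ j)"
      using i A z by (simp add: scalar_prod_def atLeast0LessThan)
    ultimately show ?thesis by simp
  qed
  define S where "S = (\<Sum>i<n. \<Sum>j<n. cnj (z $ i) * of_real (A $$ (i,j)) * z $ j)"
  define N where "N = (\<Sum>i<n. cnj (z $ i) * z $ i)"
  have S1: "S = l * N"
  proof -
    have "S = (\<Sum>i<n. cnj (z $ i) * (\<Sum>j<n. of_real (A $$ (i,j)) * z $ j))"
      unfolding S_def by (simp add: sum_distrib_left mult.assoc)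
    also have "\<dots> = (\<Sum>i<n. cnj (z $ i) * (l * z $ i))" using row by simp
    also have "\<dots> = l * N" unfolding N_def by (simp add: sum_distrib_left algebra_simps)
    finally show ?thesis .
  qed
  have symA: "A $$ (i,j) = A $$ (j,i)" if "i < n" "j < n" for i j
  proof -
    have "A $$ (i,j) = transpose_mat A $$ (i,j)" using sym by simp
    also have "\<dots> = A $$ (j,i)" using that A by simp
    finally show ?thesis .
  qed
  have S2: "cnj S = S"
  proof -
    have "cnj S = (\<Sum>i<n. \<Sum>j<n. z $ i * of_real (A $$ (i,j)) * cnj (z $ j))"
      unfolding S_def by simp
    also have "\<dots> = (\<Sum>j<n. \<Sum>i<n. z $ i * of_real (A $$ (i,j)) * cnj (z $ j))"
      by (rule sum.swap)
    also have "\<dots> = S" unfolding S_def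
      by (intro sum.cong refl, simp add: symA algebra_simps)
    finally show ?thesis .
  qed
  have Nreal: "N = of_real (\<Sum>i<n. (cmod (z $ i))^2)"
    unfolding N_def of_real_sum by (intro sum.cong refl, metis complex_norm_square mult.commute)
  obtain i where i: "i < n" "z $ i \<noteq> 0" using z by (metis dim_vec carrier_vecD eq_vecI index_zero_vec(1) index_zero_vec(2))
  have "(\<Sum>i<n. (cmod (z $ i))^2) > 0"
  proof -
    have "(cmod (z $ i))^2 \<le> (\<Sum>i<n. (cmod (z $ i))^2)"
      using i by (intro member_le_sum) auto
    moreover have "(cmod (z $ i))^2 > 0" using i by simp
    ultimately show ?thesis by linarith
  qed
  hence N0: "N \<noteq> 0" unfolding Nreal by (metis of_real_eq_0_iff less_irrefl)
  have "cnj N = N" unfolding Nreal by (simp only: complex_cnj_complex_of_real)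
  with S1 S2 have "cnj l * N = l * N" by (metis complex_cnj_mult)
  with N0 have "cnj l = l" by simp
  thus ?thesis using Reals_cnj_iff by blast
qed

lemma real_sym_eigen:
  fixes A :: "real mat"
  assumes A: "A \<in> carrier_mat n n" and sym: "transpose_mat A = A" and n: "n > 0"
  shows "\<exists>e v. v \<in> carrier_vec n \<and> v \<noteq> 0\<^sub>v n \<and> A *\<^sub>v v = e \<cdot>\<^sub>v v"
proof -
  define Ac where "Ac = map_mat complex_of_real A"
  have Ac: "Ac \<in> carrier_mat n n" using A unfolding Ac_def by simp
  from char_poly_factorized[OF Ac] obtain as where
    cp: "char_poly Ac = (\<Prod>a\<leftarrow>as. [:- a, 1:])" and len: "length as = n" by blast
  from len n obtain l as' where as: "as = l # as'" by (cases as) auto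
  have "poly (char_poly Ac) l = 0" unfolding cp as by simp
  hence "eigenvalue Ac l" using eigenvalue_root_char_poly[OF Ac] by simp
  from find_eigenvector[OF Ac this] obtain z where "eigenvector Ac z l" by blast
  hence z: "z \<in> carrier_vec n" "z \<noteq> 0\<^sub>v n" and ev: "Ac *\<^sub>v z = l \<cdot>\<^sub>v z"
    unfolding eigenvector_def using Ac by auto
  have "l \<in> \<real>" by (rule complex_eigen_real[OF A sym z ev[unfolded Ac_def]])
  then obtain r where r: "l = of_real r" by (metis Reals_cases)
  have row: "(\<Sum>j<n. of_real (A $$ (i,j)) * z $ j) = l * z $ i" if i: "i < n" for i
  proof -
    have "(Ac *\<^sub>v z) $ i = l * z $ i" using ev i z by simp
    moreover have "(Ac *\<^sub>v z) $ i = (\<Sum>j<n. of_real (A $$ (i,j)) * z $ j)"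
      using i A z unfolding Ac_def by (simp add: scalar_prod_def atLeast0LessThan)
    ultimately show ?thesis by simp
  qed
  define v1 where "v1 = vec n (\<lambda>i. Re (z $ i))"
  define v2 where "v2 = vec n (\<lambda>i. Im (z $ i))"
  have e1: "A *\<^sub>v v1 = r \<cdot>\<^sub>v v1"
  proof (rule eq_vecI)
    fix i assume "i < dim_vec (r \<cdot>\<^sub>v v1)"
    hence i: "i < n" unfolding v1_def by simp
    have "(A *\<^sub>v v1) $ i = (\<Sum>j<n. A $$ (i,j) * Re (z $ j))"
      using i A unfolding v1_def by (simp add: scalar_prod_def atLeast0LessThan)
    also have "\<dots> = Re (\<Sum>j<n. of_real (A $$ (i,j)) * z $ j)" by (simp add: Re_sum)
    also have "\<dots> = r * Re (z $ i)" using row[OF i] r by simp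
    finally show "(A *\<^sub>v v1) $ i = (r \<cdot>\<^sub>v v1) $ i" using i unfolding v1_def by simp
  qed (insert A, auto simp: v1_def)
  have e2: "A *\<^sub>v v2 = r \<cdot>\<^sub>v v2"
  proof (rule eq_vecI)
    fix i assume "i < dim_vec (r \<cdot>\<^sub>v v2)"
    hence i: "i < n" unfolding v2_def by simp
    have "(A *\<^sub>v v2) $ i = (\<Sum>j<n. A $$ (i,j) * Im (z $ j))"
      using i A unfolding v2_def by (simp add: scalar_prod_def atLeast0LessThan)
    also have "\<dots> = Im (\<Sum>j<n. of_real (A $$ (i,j)) * z $ j)" by (simp add: Im_sum)
    also have "\<dots> = r * Im (z $ i)" using row[OF i] r by simp
    finally show "(A *\<^sub>v v2) $ i = (r \<cdot>\<^sub>v v2) $ i" using i unfolding v2_def by simp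
  qed (insert A, auto simp: v2_def)
  obtain i where i: "i < n" "z $ i \<noteq> 0" using z by (metis dim_vec carrier_vecD eq_vecI index_zero_vec(1) index_zero_vec(2))
  show ?thesis
  proof (cases "Re (z $ i) = 0")
    case True
    hence "Im (z $ i) \<noteq> 0" using i complex_eqI by force
    hence "v2 \<noteq> 0\<^sub>v n" using i unfolding v2_def by (metis index_vec index_zero_vec(1))
    moreover have "v2 \<in> carrier_vec n" unfolding v2_def by simp
    ultimately show ?thesis using e2 by blast
  next
    case False
    hence "v1 \<noteq> 0\<^sub>v n" using i unfolding v1_def by (metis index_vec index_zero_vec(1))
    moreover have "v1 \<in> carrier_vec n" unfolding v1_def by simp
    ultimately show ?thesis using e1 by blast
  qed
qed

lemma conj_real_vec: "conjugate (v :: real vec) = v"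
  by (rule eq_vecI) auto

lemma sprod_self_nonneg: "(v :: real vec) \<bullet> v \<ge> 0"
  unfolding scalar_prod_def by (intro sum_nonneg) auto

lemma spectral_real_sym:
  fixes A :: "real mat"
  assumes "A \<in> carrier_mat n n" "transpose_mat A = A"
  shows "\<exists>U D. U \<in> carrier_mat n n \<and> D \<in> carrier_mat n n \<and> diagonal_mat D \<and>
     transpose_mat U * U = 1\<^sub>m n \<and> A = U * D * transpose_mat U"
  using assms
proof (induction n arbitrary: A)
  case 0
  then show ?case
    by (intro exI[of _ "1\<^sub>m 0"]) (auto intro!: eq_matI simp: diagonal_mat_def)
next
  case (Suc m)
  define n where "n = Suc m"
  have A: "A \<in> carrier_mat n n" and sym: "transpose_mat A = A" using Suc.prems n_def by auto
  obtain e v where v: "v \<in> carrier_vec n" and v0: "v \<noteq> 0\<^sub>v n" and ev: "A *\<^sub>v v = e \<cdot>\<^sub>v v"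
    using real_sym_eigen[OF A sym] n_def by auto
  interpret cof_vec_space n "TYPE(real)" .
  define b where "b = basis_completion v"
  from basis_completion[OF v v0, folded b_def]
  have dist_b: "distinct b" 
    and indep: "\<not> lin_dep (set b)" and b: "set b \<subseteq> carrier_vec n" and hdb: "hd b = v" 
    and len_b: "length b = n" by auto
  from hdb len_b n_def obtain vs where bv: "b = v # vs" by (cases b, auto)
  define ws where "ws = gram_schmidt n b"
  from gram_schmidt_result[OF b dist_b indep refl, folded ws_def]
  have ws: "set ws \<subseteq> carrier_vec n" "corthogonal ws" "length ws = n" 
    by (auto simp: len_b)
  from gram_schmidt_hd[OF v, of vs, folded bv] have hdws: "hd ws = v" unfolding ws_def .
  define nv where "nv = (\<lambda>w :: real vec. (1 / sqrt (w \<bullet> w)) \<cdot>\<^sub>v w)"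
  define ws' where "ws' = map nv ws"
  have wsc: "ws ! i \<in> carrier_vec n" if "i < n" for i using ws that by auto
  have orth: "ws ! i \<bullet> ws ! j = 0 \<longleftrightarrow> i \<noteq> j" if "i < n" "j < n" for i j
    using corthogonalD[OF ws(2), of i j] that ws(3) by (simp add: conj_real_vec)
  have pos: "ws ! i \<bullet> ws ! i > 0" if "i < n" for i
    using orth[OF that that] sprod_self_nonneg[of "ws ! i"] by linarith
  have ws'c: "ws' ! i \<in> carrier_vec n" if "i < n" for i
    using wsc[OF that] that ws(3) unfolding ws'_def nv_def by simp
  have orth': "ws' ! i \<bullet> ws' ! j = (if i = j then 1 else 0)" if "i < n" "j < n" for i j
  proof -
    have "ws' ! i \<bullet> ws' ! j = (1 / sqrt (ws ! i \<bullet> ws ! i)) * (1 / sqrt (ws ! j \<bullet> ws ! j)) * (ws ! i \<bullet> ws ! j)"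
      unfolding ws'_def nv_def using that ws(3) wsc[OF that(1)] wsc[OF that(2)] by simp
    thus ?thesis using orth[OF that] pos[OF that(1)] by (auto simp: real_sqrt_mult[symmetric])
  qed
  define W where "W = mat_of_cols n ws'"
  have W: "W \<in> carrier_mat n n" unfolding W_def using mat_of_cols_carrier(1)[of n ws'] ws(3) by (simp add: ws'_def)
  have colW: "col W j = ws' ! j" if "j < n" for j
    unfolding W_def using that ws'c[OF that] ws(3) by (simp add: ws'_def)
  have WtW: "transpose_mat W * W = 1\<^sub>m n"
  proof (rule eq_matI)
    fix i j assume "i < dim_row (1\<^sub>m n)" "j < dim_col (1\<^sub>m n)"
    hence ij: "i < n" "j < n" by auto
    show "(transpose_mat W * W) $$ (i, j) = 1\<^sub>m n $$ (i, j)"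
      using ij W colW orth' by simp
  qed (insert W, auto)
  have WWt: "W * transpose_mat W = 1\<^sub>m n"
    by (rule mat_mult_left_right_inverse[OF _ W WtW]) (insert W, simp)
  have n0: "0 < n" unfolding n_def by simp
  have u0: "col W 0 = nv v" using colW[OF n0] hdws ws(3) n0 unfolding ws'_def
    by (cases ws) auto
  have evu: "A *\<^sub>v col W 0 = e \<cdot>\<^sub>v col W 0"
    unfolding u0 nv_def using mult_mat_vec[OF A v] ev by (simp add: smult_smult_assoc mult.commute)
  define A' where "A' = transpose_mat W * A * W"
  have A': "A' \<in> carrier_mat n n" unfolding A'_def using W A by simp
  have symA': "transpose_mat A' = A'"
  proof -
    have "transpose_mat A' = transpose_mat W * transpose_mat (transpose_mat W * A)"
      unfolding A'_def by (rule transpose_mult[of _ n n _ n]) (insert W A, auto)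
    also have "transpose_mat (transpose_mat W * A) = transpose_mat A * transpose_mat (transpose_mat W)"
      by (rule transpose_mult[of _ n n _ n]) (insert W A, auto)
    also have "transpose_mat W * (transpose_mat A * transpose_mat (transpose_mat W)) = A'"
      unfolding A'_def sym transpose_transpose using W A by (simp add: assoc_mult_mat[of _ n n _ n _ n])
    finally show ?thesis .
  qed
  have A'col: "A' $$ (i, 0) = (if i = 0 then e else 0)" if i: "i < n" for i
  proof -
    have cW0: "col W 0 \<in> carrier_vec n" using W col_dim[of W 0] by auto
    have c0: "col A' 0 = e \<cdot>\<^sub>v (transpose_mat W *\<^sub>v col W 0)"
    proof -
      have "col A' 0 = (transpose_mat W * A) *\<^sub>v col W 0"
        unfolding A'_def using W A n0 by (intro col_mult2) auto
      also have "\<dots> = transpose_mat W *\<^sub>v (e \<cdot>\<^sub>v col W 0)"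
        using W A evu cW0 by (subst assoc_mult_mat_vec[of _ n n _ n]) auto
      also have "\<dots> = e \<cdot>\<^sub>v (transpose_mat W *\<^sub>v col W 0)"
        using mult_mat_vec[of "transpose_mat W" n n "col W 0" e] W cW0 by auto
      finally show ?thesis .
    qed
    have "A' $$ (i,0) = col A' 0 $ i" using i A' n0 by simp
    also have "\<dots> = e * ((transpose_mat W *\<^sub>v col W 0) $ i)" unfolding c0 using i W by simp
    also have "\<dots> = e * (col W i \<bullet> col W 0)" using i W by simp
    also have "\<dots> = (if i = 0 then e else 0)" using colW[OF i] colW[OF n0] orth'[OF i n0] by simp
    finally show ?thesis .
  qed
  have A'sym: "A' $$ (i,j) = A' $$ (j,i)" if "i < n" "j < n" for i j
  proof -
    have "A' $$ (i,j) = transpose_mat A' $$ (i,j)" using symA' by simp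
    also have "\<dots> = A' $$ (j,i)" using that A' by simp
    finally show ?thesis .
  qed
  define A3 where "A3 = mat m m (\<lambda>(i,j). A' $$ (Suc i, Suc j))"
  have A3: "A3 \<in> carrier_mat m m" unfolding A3_def by simp
  have symA3: "transpose_mat A3 = A3"
    by (rule eq_matI) (auto simp: A3_def n_def intro!: A'sym)
  from Suc.IH[OF A3 symA3] obtain U3 D3 where U3: "U3 \<in> carrier_mat m m" and D3: "D3 \<in> carrier_mat m m"
    and dD3: "diagonal_mat D3" and U3U3: "transpose_mat U3 * U3 = 1\<^sub>m m"
    and A3eq: "A3 = U3 * D3 * transpose_mat U3" by blast
  have U3t: "transpose_mat U3 \<in> carrier_mat m m" using U3 by simp
  define B where "B = four_block_mat (1\<^sub>m 1) (0\<^sub>m 1 m) (0\<^sub>m m 1) U3"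
  define E :: "real mat" where "E = mat 1 1 (\<lambda>_. e)"
  define D where "D = four_block_mat E (0\<^sub>m 1 m) (0\<^sub>m m 1) D3"
  have E: "E \<in> carrier_mat 1 1" unfolding E_def by simp
  have B: "B \<in> carrier_mat n n" unfolding B_def n_def using four_block_carrier_mat[OF one_carrier_mat U3, of 1] by simp
  have D: "D \<in> carrier_mat n n" unfolding D_def n_def using four_block_carrier_mat[OF E D3] by simp
  have BD: "B * D = four_block_mat E (0\<^sub>m 1 m) (0\<^sub>m m 1) (U3 * D3)"
    unfolding B_def D_def
    by (subst mult_four_block_mat[OF _ _ _ U3 E _ _ D3]) (insert U3 D3 E, auto)
  have Bt: "transpose_mat B = four_block_mat (1\<^sub>m 1) (0\<^sub>m 1 m) (0\<^sub>m m 1) (transpose_mat U3)"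
    unfolding B_def using U3 by (subst transpose_four_block_mat) auto
  have BDBt: "B * D * transpose_mat B = four_block_mat E (0\<^sub>m 1 m) (0\<^sub>m m 1) A3"
    unfolding BD Bt A3eq
    by (subst mult_four_block_mat[OF E _ _ _ _ _ _ U3t]) (insert U3 D3 E, auto)
  have A'eq: "A' = B * D * transpose_mat B"
    unfolding BDBt
  proof (rule eq_matI)
    fix i j assume ij: "i < dim_row (four_block_mat E (0\<^sub>m 1 m) (0\<^sub>m m 1) A3)"
       "j < dim_col (four_block_mat E (0\<^sub>m 1 m) (0\<^sub>m m 1) A3)"
    hence i: "i < n" and j: "j < n" using E A3 n_def by auto
    show "A' $$ (i, j) = four_block_mat E (0\<^sub>m 1 m) (0\<^sub>m m 1) A3 $$ (i, j)"
    proof (cases "i = 0 \<or> j = 0")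
      case True
      then show ?thesis using i j E A3 A'col[OF i] A'col[OF j] A'sym[OF i j] by (auto simp: E_def n_def)
    next
      case False
      then obtain i' j' where "i = Suc i'" "j = Suc j'" by (metis not0_implies_Suc)
      then show ?thesis using i j E A3 by (auto simp: A3_def n_def)
    qed
  qed (insert A' E A3 n_def, auto)
  define U where "U = W * B"
  have U: "U \<in> carrier_mat n n" unfolding U_def using W B by simp
  have BtB: "transpose_mat B * B = 1\<^sub>m n"
    unfolding Bt unfolding B_def n_def
    by (subst mult_four_block_mat[OF _ _ _ U3t _ _ _ U3]) (insert U3 U3U3, auto)
  have UtU: "transpose_mat U * U = 1\<^sub>m n"
  proof -
    have "transpose_mat U * U = transpose_mat B * (transpose_mat W * W) * B"
      unfolding U_def using W B
      by (simp add: transpose_mult[of _ n n] assoc_mult_mat[of _ n n _ n _ n])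
    also have "\<dots> = 1\<^sub>m n" unfolding WtW using B BtB by simp
    finally show ?thesis .
  qed
  have Aeq: "A = U * D * transpose_mat U"
  proof -
    have "W * A' * transpose_mat W = (W * transpose_mat W) * A * (W * transpose_mat W)"
      unfolding A'_def using W A
      by (simp add: assoc_mult_mat[of _ n n _ n _ n])
    hence "A = W * A' * transpose_mat W" unfolding WWt using A by simp
    also have "\<dots> = U * D * transpose_mat U"
      unfolding A'eq U_def using W B D
      by (simp add: transpose_mult[of _ n n] assoc_mult_mat[of _ n n _ n _ n])
    finally show ?thesis .
  qed
  have dD: "diagonal_mat D"
    unfolding diagonal_mat_def D_def using D3 E dD3
    by (auto simp: diagonal_mat_def E_def)
  show ?case using U D dD UtU Aeq unfolding n_def by blast
qed

lemma hom_sys: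
  fixes a :: "nat \<Rightarrow> nat \<Rightarrow> real"
  assumes "finite I" "finite J" "card I < card J"
  shows "\<exists>c. (\<exists>j\<in>J. c j \<noteq> 0) \<and> (\<forall>i\<in>I. (\<Sum>j\<in>J. a i j * c j) = 0)"
  using assms
proof (induction I arbitrary: J a rule: finite_induct)
  case empty
  then obtain j0 where "j0 \<in> J" by (metis card.empty card_gt_0_iff ex_in_conv)
  then show ?case by (intro exI[of _ "\<lambda>j. if j = j0 then 1 else 0"]) auto
next
  case (insert r I)
  show ?case
  proof (cases "\<forall>j\<in>J. a r j = 0")
    case True
    from insert.IH[OF insert.prems(1), of a] insert.prems insert.hyps
    obtain c where "\<exists>j\<in>J. c j \<noteq> 0" "\<forall>i\<in>I. (\<Sum>j\<in>J. a i j * c j) = 0" by auto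
    then show ?thesis using True by (intro exI[of _ c]) auto
  next
    case False
    then obtain j0 where j0: "j0 \<in> J" "a r j0 \<noteq> 0" by blast
    define J' where "J' = J - {j0}"
    have fJ': "finite J'" using insert.prems unfolding J'_def by auto
    have cJ': "card I < card J'" using insert.prems insert.hyps j0 unfolding J'_def
      by (simp add: card_Diff_singleton)
    define b where "b = (\<lambda>i j. a i j - a i j0 * a r j / a r j0)"
    from insert.IH[OF fJ' cJ', of b] obtain c' where
      c'1: "\<exists>j\<in>J'. c' j \<noteq> 0" and c'2: "\<forall>i\<in>I. (\<Sum>j\<in>J'. b i j * c' j) = 0" by blast
    define c where "c = (\<lambda>j. if j = j0 then - (\<Sum>j\<in>J'. a r j * c' j) / a r j0 else c' j)"
    have split: "(\<Sum>j\<in>J. f j) = f j0 + (\<Sum>j\<in>J'. f j)" for f :: "nat \<Rightarrow> real"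
      unfolding J'_def using j0(1) insert.prems(1) by (simp add: sum.remove)
    have cJ'eq: "(\<Sum>j\<in>J'. g j * c j) = (\<Sum>j\<in>J'. g j * c' j)" for g
      by (intro sum.cong) (auto simp: c_def J'_def)
    have row_r: "(\<Sum>j\<in>J. a r j * c j) = 0"
      unfolding split cJ'eq using j0(2) by (simp add: c_def)
    have row_i: "(\<Sum>j\<in>J. a i j * c j) = 0" if i: "i \<in> I" for i
    proof -
      have "(\<Sum>j\<in>J. a i j * c j) = a i j0 * c j0 + (\<Sum>j\<in>J'. a i j * c' j)"
        unfolding split cJ'eq ..
      also have "\<dots> = (\<Sum>j\<in>J'. b i j * c' j)"
        unfolding b_def c_def using j0(2)
        by (simp add: sum_subtractf sum_distrib_left sum_divide_distrib algebra_simps)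
      also have "\<dots> = 0" using c'2 i by auto
      finally show ?thesis .
    qed
    have nz: "\<exists>j\<in>J. c j \<noteq> 0" using c'1 unfolding c_def J'_def by auto
    show ?thesis using row_r row_i nz by (intro exI[of _ c]) auto
  qed
qed

definition lcomb :: "nat \<Rightarrow> nat \<Rightarrow> (nat \<Rightarrow> nat \<Rightarrow> real) \<Rightarrow> (nat \<Rightarrow> real) \<Rightarrow> real vec" where
  "lcomb n d w c = vec n (\<lambda>k. \<Sum>j<d. c j * w j k)"

definition sdecomp :: "nat \<Rightarrow> real mat \<Rightarrow> real mat \<Rightarrow> real mat \<Rightarrow> bool" where
  "sdecomp n A U D \<longleftrightarrow> U \<in> carrier_mat n n \<and> D \<in> carrier_mat n n \<and> diagonal_mat D \<and>
     transpose_mat U * U = 1\<^sub>m n \<and> A = U * D * transpose_mat U"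

lemma count_core:
  assumes U: "U \<in> carrier_mat n n"
    and key: "\<And>c. (\<exists>j<d. c j \<noteq> 0) \<Longrightarrow> (\<forall>i<n. P i \<longrightarrow> (transpose_mat U *\<^sub>v lcomb n d w c) $ i = 0) \<Longrightarrow> False"
  shows "d \<le> card {i. i < n \<and> P i}"
proof (rule ccontr)
  assume "\<not> d \<le> card {i. i < n \<and> P i}"
  hence lt: "card {i. i < n \<and> P i} < card {..<d}" by simp
  define a where "a = (\<lambda>i j. \<Sum>k<n. U $$ (k,i) * w j k)"
  from hom_sys[OF _ _ lt, of a] obtain c where
    c1: "\<exists>j\<in>{..<d}. c j \<noteq> 0" and c2: "\<forall>i\<in>{i. i < n \<and> P i}. (\<Sum>j<d. a i j * c j) = 0" by auto
  have eq: "(transpose_mat U *\<^sub>v lcomb n d w c) $ i = (\<Sum>j<d. a i j * c j)" if i: "i < n" for i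
  proof -
    have "(transpose_mat U *\<^sub>v lcomb n d w c) $ i = (\<Sum>k<n. U $$ (k,i) * (\<Sum>j<d. c j * w j k))"
      using i U by (simp add: lcomb_def scalar_prod_def atLeast0LessThan)
    also have "\<dots> = (\<Sum>k<n. \<Sum>j<d. U $$ (k,i) * (c j * w j k))" by (simp add: sum_distrib_left)
    also have "\<dots> = (\<Sum>j<d. \<Sum>k<n. U $$ (k,i) * (c j * w j k))" by (rule sum.swap)
    also have "\<dots> = (\<Sum>j<d. a i j * c j)" unfolding a_def
      by (simp add: sum_distrib_left sum_distrib_right mult_ac)
    finally show ?thesis .
  qed
  show False using key[of c] c1 c2 eq by auto
qed

lemma sdecomp_quad:
  assumes S: "sdecomp n A U D" and x: "x \<in> carrier_vec n"
  shows "x \<bullet> (A *\<^sub>v x) = (\<Sum>i<n. D $$ (i,i) * ((transpose_mat U *\<^sub>v x) $ i)^2)"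
    and "x \<bullet> x = (\<Sum>i<n. ((transpose_mat U *\<^sub>v x) $ i)^2)"
    and "(\<forall>i<n. (transpose_mat U *\<^sub>v x) $ i = 0) \<Longrightarrow> x = 0\<^sub>v n"
proof -
  from S have U: "U \<in> carrier_mat n n" and D: "D \<in> carrier_mat n n" and dD: "diagonal_mat D"
    and UtU: "transpose_mat U * U = 1\<^sub>m n" and A: "A = U * D * transpose_mat U"
    unfolding sdecomp_def by auto
  have UUt: "U * transpose_mat U = 1\<^sub>m n"
    by (rule mat_mult_left_right_inverse[OF _ U UtU]) (insert U, simp)
  define y where "y = transpose_mat U *\<^sub>v x"
  have y: "y \<in> carrier_vec n" unfolding y_def using U x by simp
  have xUy: "x = U *\<^sub>v y"
  proof -
    have "U *\<^sub>v y = (U * transpose_mat U) *\<^sub>v x" unfolding y_def using U x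
      by (simp add: assoc_mult_mat_vec[of _ n n _ n])
    also have "\<dots> = x" unfolding UUt using x by simp
    finally show ?thesis by simp
  qed
  have Dy: "(D *\<^sub>v y) $ i = D $$ (i,i) * y $ i" if i: "i < n" for i
  proof -
    have "(D *\<^sub>v y) $ i = (\<Sum>k<n. D $$ (i,k) * y $ k)"
      using i D y by (simp add: scalar_prod_def atLeast0LessThan)
    also have "\<dots> = (\<Sum>k\<in>{i}. D $$ (i,k) * y $ k)"
      using dD D i by (intro sum.mono_neutral_right) (auto simp: diagonal_mat_def)
    finally show ?thesis by simp
  qed
  have "x \<bullet> (A *\<^sub>v x) = x \<bullet> (U *\<^sub>v (D *\<^sub>v y))"
    unfolding A y_def using U D x
    by (simp add: assoc_mult_mat_vec[of _ n n _ n])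
  also have "\<dots> = y \<bullet> (D *\<^sub>v y)"
  proof -
    have "(transpose_mat U *\<^sub>v x) \<bullet> (D *\<^sub>v y) = x \<bullet> (U *\<^sub>v (D *\<^sub>v y))"
      by (rule transpose_vec_mult_scalar[OF U]) (insert D y x, auto)
    thus ?thesis unfolding y_def by simp
  qed
  also have "\<dots> = (\<Sum>i<n. D $$ (i,i) * (y $ i)^2)"
    unfolding scalar_prod_def using y D Dy by (auto simp: atLeast0LessThan power2_eq_square intro!: sum.cong)
  finally show "x \<bullet> (A *\<^sub>v x) = (\<Sum>i<n. D $$ (i,i) * ((transpose_mat U *\<^sub>v x) $ i)^2)"
    unfolding y_def .
  have "x \<bullet> x = x \<bullet> (U *\<^sub>v y)" using xUy by simp
  also have "\<dots> = y \<bullet> y"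
    unfolding y_def using transpose_vec_mult_scalar[OF U, of "y" x] U x y by (simp add: y_def)
  also have "\<dots> = (\<Sum>i<n. (y $ i)^2)"
    unfolding scalar_prod_def using y by (auto simp: atLeast0LessThan power2_eq_square)
  finally show "x \<bullet> x = (\<Sum>i<n. ((transpose_mat U *\<^sub>v x) $ i)^2)" unfolding y_def .
  assume "\<forall>i<n. (transpose_mat U *\<^sub>v x) $ i = 0"
  hence "y = 0\<^sub>v n" unfolding y_def using y U by (intro eq_vecI) (auto simp: y_def)
  thus "x = 0\<^sub>v n" using xUy U by (intro eq_vecI) (auto simp: scalar_prod_def)
qed

lemma lcomb_carrier[simp]: "lcomb n d w c \<in> carrier_vec n"
  unfolding lcomb_def by simp

lemma rayleigh_le:
  assumes S: "sdecomp n A U D"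
    and h: "\<And>c. (\<exists>j<d. c j \<noteq> 0) \<Longrightarrow> lcomb n d w c \<noteq> 0\<^sub>v n \<and>
       lcomb n d w c \<bullet> (A *\<^sub>v lcomb n d w c) \<le> t * (lcomb n d w c \<bullet> lcomb n d w c)"
  shows "d \<le> card {i. i < n \<and> D $$ (i,i) \<le> t}"
proof (rule count_core)
  show "U \<in> carrier_mat n n" using S unfolding sdecomp_def by auto
  fix c assume c: "\<exists>j<d. c j \<noteq> 0"
    and z: "\<forall>i<n. D $$ (i,i) \<le> t \<longrightarrow> (transpose_mat U *\<^sub>v lcomb n d w c) $ i = 0"
  define x where "x = lcomb n d w c"
  define y where "y = transpose_mat U *\<^sub>v x"
  have x: "x \<in> carrier_vec n" unfolding x_def by simp
  from h[OF c] have x0: "x \<noteq> 0\<^sub>v n" and le: "x \<bullet> (A *\<^sub>v x) \<le> t * (x \<bullet> x)" unfolding x_def by auto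
  obtain i0 where i0: "i0 < n" "y $ i0 \<noteq> 0" using sdecomp_quad(3)[OF S x] x0 unfolding y_def by blast
  have es0: "D $$ (i0,i0) > t" using z i0 unfolding y_def x_def by force
  have "x \<bullet> (A *\<^sub>v x) - t * (x \<bullet> x) = (\<Sum>i<n. (D $$ (i,i) - t) * (y $ i)^2)"
    unfolding sdecomp_quad(1)[OF S x] sdecomp_quad(2)[OF S x] y_def
    by (simp add: sum_distrib_left sum_subtractf algebra_simps)
  also have "\<dots> > 0"
  proof -
    have nn: "\<forall>i\<in>{..<n}. 0 \<le> (D $$ (i,i) - t) * (y $ i)^2"
    proof
      fix i assume "i \<in> {..<n}"
      thus "0 \<le> (D $$ (i,i) - t) * (y $ i)^2" using z unfolding y_def x_def
        by (cases "D $$ (i,i) \<le> t") auto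
    qed
    have "0 < (D $$ (i0,i0) - t) * (y $ i0)^2" using es0 i0 by simp
    also have "\<dots> \<le> (\<Sum>i<n. (D $$ (i,i) - t) * (y $ i)^2)"
      using nn i0 by (intro member_le_sum) auto
    finally show ?thesis .
  qed
  finally show False using le by simp
qed

lemma rayleigh_ge:
  assumes S: "sdecomp n A U D"
    and h: "\<And>c. (\<exists>j<d. c j \<noteq> 0) \<Longrightarrow> lcomb n d w c \<noteq> 0\<^sub>v n \<and>
       lcomb n d w c \<bullet> (A *\<^sub>v lcomb n d w c) \<ge> t * (lcomb n d w c \<bullet> lcomb n d w c)"
  shows "d \<le> card {i. i < n \<and> D $$ (i,i) \<ge> t}"
proof (rule count_core)
  show "U \<in> carrier_mat n n" using S unfolding sdecomp_def by auto
  fix c assume c: "\<exists>j<d. c j \<noteq> 0"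
    and z: "\<forall>i<n. D $$ (i,i) \<ge> t \<longrightarrow> (transpose_mat U *\<^sub>v lcomb n d w c) $ i = 0"
  define x where "x = lcomb n d w c"
  define y where "y = transpose_mat U *\<^sub>v x"
  have x: "x \<in> carrier_vec n" unfolding x_def by simp
  from h[OF c] have x0: "x \<noteq> 0\<^sub>v n" and le: "x \<bullet> (A *\<^sub>v x) \<ge> t * (x \<bullet> x)" unfolding x_def by auto
  obtain i0 where i0: "i0 < n" "y $ i0 \<noteq> 0" using sdecomp_quad(3)[OF S x] x0 unfolding y_def by blast
  have es0: "D $$ (i0,i0) < t" using z i0 unfolding y_def x_def by force
  have "t * (x \<bullet> x) - x \<bullet> (A *\<^sub>v x) = (\<Sum>i<n. (t - D $$ (i,i)) * (y $ i)^2)"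
    unfolding sdecomp_quad(1)[OF S x] sdecomp_quad(2)[OF S x] y_def
    by (simp add: sum_distrib_left sum_subtractf algebra_simps)
  also have "\<dots> > 0"
  proof -
    have nn: "\<forall>i\<in>{..<n}. 0 \<le> (t - D $$ (i,i)) * (y $ i)^2"
    proof
      fix i assume "i \<in> {..<n}"
      thus "0 \<le> (t - D $$ (i,i)) * (y $ i)^2" using z unfolding y_def x_def
        by (cases "D $$ (i,i) \<ge> t") auto
    qed
    have "0 < (t - D $$ (i0,i0)) * (y $ i0)^2" using es0 i0 by simp
    also have "\<dots> \<le> (\<Sum>i<n. (t - D $$ (i,i)) * (y $ i)^2)"
      using nn i0 by (intro member_le_sum) auto
    finally show ?thesis .
  qed
  finally show False using le by simp
qed

lemma rayleigh_gt:
  assumes S: "sdecomp n A U D"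
    and h: "\<And>c. (\<exists>j<d. c j \<noteq> 0) \<Longrightarrow>
       lcomb n d w c \<bullet> (A *\<^sub>v lcomb n d w c) > t * (lcomb n d w c \<bullet> lcomb n d w c)"
  shows "d \<le> card {i. i < n \<and> D $$ (i,i) > t}"
proof (rule count_core)
  show "U \<in> carrier_mat n n" using S unfolding sdecomp_def by auto
  fix c assume c: "\<exists>j<d. c j \<noteq> 0"
    and z: "\<forall>i<n. D $$ (i,i) > t \<longrightarrow> (transpose_mat U *\<^sub>v lcomb n d w c) $ i = 0"
  define x where "x = lcomb n d w c"
  define y where "y = transpose_mat U *\<^sub>v x"
  have x: "x \<in> carrier_vec n" unfolding x_def by simp
  from h[OF c] have gt: "x \<bullet> (A *\<^sub>v x) > t * (x \<bullet> x)" unfolding x_def by auto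
  have "x \<bullet> (A *\<^sub>v x) - t * (x \<bullet> x) = (\<Sum>i<n. (D $$ (i,i) - t) * (y $ i)^2)"
    unfolding sdecomp_quad(1)[OF S x] sdecomp_quad(2)[OF S x] y_def
    by (simp add: sum_distrib_left sum_subtractf algebra_simps)
  also have "\<dots> \<le> 0"
  proof (intro sum_nonpos)
    fix i assume "i \<in> {..<n}"
    thus "(D $$ (i,i) - t) * (y $ i)^2 \<le> 0" using z unfolding y_def x_def
      by (cases "D $$ (i,i) > t") (auto simp: mult_nonpos_nonneg)
  qed
  finally show False using gt by simp
qed

lemma ckc_adj_int:
  "ckc_adj p q1 q2 a b \<longleftrightarrow> a \<in> ckc_vertices p q1 q2 \<and> b \<in> ckc_vertices p q1 q2 \<and> a \<noteq> b \<and>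
     ((a \<in> {- int p + 1 .. 0} \<and> b \<in> {- int p + 1 .. 0}) \<or> b = a + 1 \<or> a = b + 1)"
proof
  assume "ckc_adj p q1 q2 a b"
  thus "a \<in> ckc_vertices p q1 q2 \<and> b \<in> ckc_vertices p q1 q2 \<and> a \<noteq> b \<and>
     ((a \<in> {- int p + 1 .. 0} \<and> b \<in> {- int p + 1 .. 0}) \<or> b = a + 1 \<or> a = b + 1)"
    unfolding ckc_adj_def doubleton_eq_iff by auto
next
  assume H: "a \<in> ckc_vertices p q1 q2 \<and> b \<in> ckc_vertices p q1 q2 \<and> a \<noteq> b \<and>
     ((a \<in> {- int p + 1 .. 0} \<and> b \<in> {- int p + 1 .. 0}) \<or> b = a + 1 \<or> a = b + 1)"
  hence V: "a \<in> ckc_vertices p q1 q2" "b \<in> ckc_vertices p q1 q2" "a \<noteq> b" by auto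
  have cons: "ckc_adj p q1 q2 a b" if ab: "{a, b} = {x, x + 1}" and x: "x \<in> ckc_vertices p q1 q2" "x + 1 \<in> ckc_vertices p q1 q2" for x
  proof -
    consider (K) "x \<in> {- int p + 1 .. 0} \<and> x + 1 \<in> {- int p + 1 .. 0}" | (L) "x \<le> - int p - 1" | (M1) "x = - int p" 
      | (M2) "x = 0" | (R) "x \<ge> 1" by force
    thus ?thesis
    proof cases
      case K then show ?thesis using V ab unfolding ckc_adj_def doubleton_eq_iff by auto
    next
      case L
      have "\<exists>j. - int q1 - int p + 2 \<le> j \<and> j \<le> - int p - 1 \<and> {a,b} = {j,j+1}"
        using L x ab by (intro exI[of _ x]) (auto simp: ckc_vertices_def)
      then show ?thesis using V unfolding ckc_adj_def by blast
    next
      case M1 then show ?thesis using V ab unfolding ckc_adj_def by auto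
    next
      case M2 then show ?thesis using V ab unfolding ckc_adj_def by auto
    next
      case R
      have "\<exists>j. 1 \<le> j \<and> j \<le> int q2 - 2 \<and> {a,b} = {j,j+1}"
        using R x ab by (intro exI[of _ x]) (auto simp: ckc_vertices_def)
      then show ?thesis using V unfolding ckc_adj_def by blast
    qed
  qed
  from H consider "a \<in> {- int p + 1 .. 0} \<and> b \<in> {- int p + 1 .. 0}" | "b = a + 1" | "a = b + 1" by blast
  thus "ckc_adj p q1 q2 a b"
  proof cases
    case 1 then show ?thesis using V unfolding ckc_adj_def by auto
  next
    case 2 then show ?thesis using V by (intro cons[of a]) auto
  next
    case 3 then show ?thesis using V by (intro cons[of b]) auto
  qed
qed

definition KS :: "nat \<Rightarrow> nat \<Rightarrow> nat set" where
  "KS p q1 = {q1 - 1 .. q1 + p - 2}"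

definition adjI :: "nat \<Rightarrow> nat \<Rightarrow> nat \<Rightarrow> nat \<Rightarrow> bool" where
  "adjI p q1 i j \<longleftrightarrow> i \<noteq> j \<and> ((i \<in> KS p q1 \<and> j \<in> KS p q1) \<or> j = Suc i \<or> i = Suc j)"

lemma adjI_sym: "adjI p q1 i j = adjI p q1 j i"
  unfolding adjI_def by auto

lemma adjI_irrefl[simp]: "\<not> adjI p q1 i i"
  unfolding adjI_def by auto

lemma vertex_in_iff:
  assumes "q1 \<ge> 2" "q2 \<ge> 2" "p \<ge> 3"
  shows "ckc_vertex p q1 q2 i \<in> ckc_vertices p q1 q2 \<longleftrightarrow> i < ckc_n p q1 q2"
  using assms unfolding ckc_vertex_def ckc_vertices_def ckc_n_def by auto

lemma adj_idx:
  assumes "q1 \<ge> 2" "q2 \<ge> 2" "p \<ge> 3" "i < ckc_n p q1 q2" "j < ckc_n p q1 q2"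
  shows "ckc_adj p q1 q2 (ckc_vertex p q1 q2 i) (ckc_vertex p q1 q2 j) \<longleftrightarrow> adjI p q1 i j"
  using assms unfolding ckc_adj_int vertex_in_iff[OF assms(1-3)] unfolding adjI_def KS_def ckc_vertex_def
  by auto

lemma vertex_surj:
  assumes "q1 \<ge> 2" "q2 \<ge> 2" "p \<ge> 3" "v \<in> ckc_vertices p q1 q2"
  shows "\<exists>i < ckc_n p q1 q2. v = ckc_vertex p q1 q2 i"
proof -
  define i where "i = nat (v + int q1 + int p - 2)"
  have "v = ckc_vertex p q1 q2 i" using assms unfolding i_def ckc_vertex_def ckc_vertices_def by auto
  moreover have "i < ckc_n p q1 q2" using assms unfolding i_def ckc_n_def ckc_vertices_def by auto
  ultimately show ?thesis by blast
qed

lemma degree_idx: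
  assumes "q1 \<ge> 2" "q2 \<ge> 2" "p \<ge> 3" "i < ckc_n p q1 q2"
  shows "ckc_degree p q1 q2 (ckc_vertex p q1 q2 i) = card {k. k < ckc_n p q1 q2 \<and> adjI p q1 i k}"
proof -
  let ?n = "ckc_n p q1 q2"
  have eq: "{v \<in> ckc_vertices p q1 q2. ckc_adj p q1 q2 (ckc_vertex p q1 q2 i) v}
      = ckc_vertex p q1 q2 ` {k. k < ?n \<and> adjI p q1 i k}"
  proof
    show "{v \<in> ckc_vertices p q1 q2. ckc_adj p q1 q2 (ckc_vertex p q1 q2 i) v}
      \<subseteq> ckc_vertex p q1 q2 ` {k. k < ?n \<and> adjI p q1 i k}"
    proof
      fix v assume v: "v \<in> {v \<in> ckc_vertices p q1 q2. ckc_adj p q1 q2 (ckc_vertex p q1 q2 i) v}"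
      then obtain k where k: "k < ?n" "v = ckc_vertex p q1 q2 k" using vertex_surj[OF assms(1-3)] by blast
      have "adjI p q1 i k" using v k adj_idx[OF assms k(1)] by simp
      thus "v \<in> ckc_vertex p q1 q2 ` {k. k < ?n \<and> adjI p q1 i k}"
        using k by blast
    qed
    show "ckc_vertex p q1 q2 ` {k. k < ?n \<and> adjI p q1 i k}
      \<subseteq> {v \<in> ckc_vertices p q1 q2. ckc_adj p q1 q2 (ckc_vertex p q1 q2 i) v}"
    proof
      fix v assume "v \<in> ckc_vertex p q1 q2 ` {k. k < ?n \<and> adjI p q1 i k}"
      then obtain k where k: "k < ?n" "adjI p q1 i k" "v = ckc_vertex p q1 q2 k" by blast
      have "v \<in> ckc_vertices p q1 q2" using k vertex_in_iff[OF assms(1-3)] by simp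
      moreover have "ckc_adj p q1 q2 (ckc_vertex p q1 q2 i) v" using k adj_idx[OF assms k(1)] by simp
      ultimately show "v \<in> {v \<in> ckc_vertices p q1 q2. ckc_adj p q1 q2 (ckc_vertex p q1 q2 i) v}" by simp
    qed
  qed
  have inj: "inj_on (ckc_vertex p q1 q2) {k. k < ?n \<and> adjI p q1 i k}"
    unfolding ckc_vertex_def by (auto intro: inj_onI)
  show ?thesis unfolding ckc_degree_def eq using card_image[OF inj] .
qed

lemma card_as_sum: "real (card {k. k < (n::nat) \<and> P k}) = (\<Sum>k<n. if P k then 1 else 0)"
proof (induction n)
  case 0
  then show ?case by simp
next
  case (Suc n)
  have eq: "{k. k < Suc n \<and> P k} = {k. k < n \<and> P k} \<union> {k. k = n \<and> P k}" by auto
  have "card {k. k < Suc n \<and> P k} = card {k. k < n \<and> P k} + card {k. k = n \<and> P k}"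
    unfolding eq by (rule card_Un_disjoint) auto
  moreover have "{k. k = n \<and> P k} = (if P n then {n} else {})" by auto
  hence "card {k. k = n \<and> P k} = (if P n then 1 else 0)" by simp
  ultimately show ?case using Suc.IH by simp
qed

lemma lap_carrier: "ckc_laplacian p q1 q2 \<in> carrier_mat (ckc_n p q1 q2) (ckc_n p q1 q2)"
  unfolding ckc_laplacian_def by simp

lemma lap_entry:
  assumes "q1 \<ge> 2" "q2 \<ge> 2" "p \<ge> 3" "i < ckc_n p q1 q2" "j < ckc_n p q1 q2"
  shows "ckc_laplacian p q1 q2 $$ (i,j) =
    (if i = j then (\<Sum>k<ckc_n p q1 q2. if adjI p q1 i k then 1 else 0) else 0) - (if adjI p q1 i j then 1 else 0)"
  using assms unfolding ckc_laplacian_def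
  by (simp add: Let_def degree_idx adj_idx card_as_sum)

lemma lap_sym:
  assumes "q1 \<ge> 2" "q2 \<ge> 2" "p \<ge> 3"
  shows "transpose_mat (ckc_laplacian p q1 q2) = ckc_laplacian p q1 q2"
  by (rule eq_matI) (insert assms lap_carrier[of p q1 q2], auto simp: lap_entry adjI_sym)

lemma sym_quad:
  fixes f :: "nat \<Rightarrow> real" and R :: "nat \<Rightarrow> nat \<Rightarrow> bool"
  assumes sym: "\<And>i j. R i j = R j i"
  shows "(\<Sum>i<n. \<Sum>j<n. if R i j then (f i - f j)^2 else 0) =
    2 * ((\<Sum>i<n. (\<Sum>k<n. if R i k then 1 else 0) * (f i)^2) - (\<Sum>i<n. \<Sum>j<n. (if R i j then 1 else 0) * f i * f j))"
proof -
  define r where "r = (\<lambda>i j. if R i j then 1 else 0 :: real)"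
  have pw: "(if R i j then (f i - f j)^2 else 0) = r i j * (f i)^2 + r i j * (f j)^2 - 2 * (r i j * f i * f j)" for i j
    unfolding r_def by (simp add: power2_diff)
  have "(\<Sum>i<n. \<Sum>j<n. if R i j then (f i - f j)^2 else 0) =
     (\<Sum>i<n. \<Sum>j<n. r i j * (f i)^2) + (\<Sum>i<n. \<Sum>j<n. r i j * (f j)^2)
     - (\<Sum>i<n. \<Sum>j<n. 2 * (r i j * f i * f j))"
    unfolding pw by (simp only: sum.distrib sum_subtractf)
  also have "(\<Sum>i<n. \<Sum>j<n. 2 * (r i j * f i * f j)) = 2 * (\<Sum>i<n. \<Sum>j<n. r i j * f i * f j)"
    by (simp add: sum_distrib_left)
  also have "(\<Sum>i<n. \<Sum>j<n. r i j * (f j)^2) = (\<Sum>j<n. \<Sum>i<n. r i j * (f j)^2)"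
    by (rule sum.swap)
  also have "\<dots> = (\<Sum>i<n. \<Sum>j<n. r i j * (f i)^2)"
    using sym unfolding r_def by simp
  also have "(\<Sum>i<n. \<Sum>j<n. r i j * (f i)^2) = (\<Sum>i<n. (\<Sum>k<n. r i k) * (f i)^2)"
    by (simp add: sum_distrib_right)
  finally show ?thesis unfolding r_def by simp
qed

lemma lap_quad:
  assumes "q1 \<ge> 2" "q2 \<ge> 2" "p \<ge> 3" "x \<in> carrier_vec (ckc_n p q1 q2)"
  shows "2 * (x \<bullet> (ckc_laplacian p q1 q2 *\<^sub>v x)) =
    (\<Sum>i<ckc_n p q1 q2. \<Sum>j<ckc_n p q1 q2. if adjI p q1 i j then (x $ i - x $ j)^2 else 0)"
proof -
  let ?n = "ckc_n p q1 q2"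
  let ?L = "ckc_laplacian p q1 q2"
  let ?deg = "\<lambda>i. (\<Sum>k<?n. if adjI p q1 i k then 1 else 0) :: real"
  have row: "(?L *\<^sub>v x) $ i = ?deg i * x $ i - (\<Sum>j<?n. (if adjI p q1 i j then 1 else 0) * x $ j)" if i: "i < ?n" for i
  proof -
    have "(?L *\<^sub>v x) $ i = (\<Sum>j<?n. ?L $$ (i,j) * x $ j)"
      using i assms(4) lap_carrier[of p q1 q2] by (simp add: scalar_prod_def atLeast0LessThan)
    also have "\<dots> = (\<Sum>j<?n. (if j = i then ?deg i * x $ j else 0) - (if adjI p q1 i j then 1 else 0) * x $ j)"
      using i assms(1-3) by (intro sum.cong refl) (simp add: lap_entry left_diff_distrib)
    also have "\<dots> = ?deg i * x $ i - (\<Sum>j<?n. (if adjI p q1 i j then 1 else 0) * x $ j)"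
      using i by (simp only: sum_subtractf sum.delta) simp
    finally show ?thesis .
  qed
  have "x \<bullet> (?L *\<^sub>v x) = (\<Sum>i<?n. x $ i * (?L *\<^sub>v x) $ i)"
    using assms(4) lap_carrier[of p q1 q2] by (simp add: scalar_prod_def atLeast0LessThan)
  also have "\<dots> = (\<Sum>i<?n. ?deg i * (x $ i)^2 - (\<Sum>j<?n. (if adjI p q1 i j then 1 else 0) * x $ i * x $ j))"
    by (intro sum.cong refl) (simp add: row sum_distrib_left power2_eq_square algebra_simps)
  also have "\<dots> = (\<Sum>i<?n. ?deg i * (x $ i)^2) - (\<Sum>i<?n. \<Sum>j<?n. (if adjI p q1 i j then 1 else 0) * x $ i * x $ j)"
    by (simp add: sum_subtractf)
  finally have e1: "x \<bullet> (?L *\<^sub>v x) = (\<Sum>i<?n. ?deg i * (x $ i)^2) - (\<Sum>i<?n. \<Sum>j<?n. (if adjI p q1 i j then 1 else 0) * x $ i * x $ j)" .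
  have e2: "(\<Sum>i<?n. \<Sum>j<?n. if adjI p q1 i j then (x $ i - x $ j)^2 else 0) =
    2 * ((\<Sum>i<?n. ?deg i * (x $ i)^2) - (\<Sum>i<?n. \<Sum>j<?n. (if adjI p q1 i j then 1 else 0) * x $ i * x $ j))"
    by (rule sym_quad) (rule adjI_sym)
  show ?thesis unfolding e1 e2 ..
qed

definition Tsum :: "nat \<Rightarrow> nat \<Rightarrow> nat \<Rightarrow> (nat \<Rightarrow> real) \<Rightarrow> real" where
  "Tsum n p q1 f = (\<Sum>i<n. if Suc i < n \<and> \<not> (i \<in> KS p q1 \<and> Suc i \<in> KS p q1) then (f i - f (Suc i))^2 else 0)"

lemma card_KS: "q1 \<ge> 1 \<Longrightarrow> p \<ge> 1 \<Longrightarrow> card (KS p q1) = p"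
  unfolding KS_def by simp

lemma K_sq_sum:
  fixes f :: "nat \<Rightarrow> real"
  assumes "finite K"
  shows "(\<Sum>i\<in>K. \<Sum>j\<in>K. (f i - f j)^2) = 2 * (real (card K) * (\<Sum>k\<in>K. (f k)^2) - (\<Sum>k\<in>K. f k)^2)"
proof -
  have "(\<Sum>i\<in>K. \<Sum>j\<in>K. (f i - f j)^2) =
      (\<Sum>i\<in>K. \<Sum>j\<in>K. (f i)^2) + (\<Sum>i\<in>K. \<Sum>j\<in>K. (f j)^2) - 2 * (\<Sum>i\<in>K. \<Sum>j\<in>K. f i * f j)"
    by (simp add: power2_diff sum.distrib sum_subtractf sum_distrib_left mult.assoc)
  also have "(\<Sum>i\<in>K. \<Sum>j\<in>K. (f i)^2) = real (card K) * (\<Sum>k\<in>K. (f k)^2)"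
    by (simp add: sum_distrib_left mult.commute)
  also have "(\<Sum>i\<in>K. \<Sum>j\<in>K. (f j)^2) = real (card K) * (\<Sum>k\<in>K. (f k)^2)"
    by simp
  also have "(\<Sum>i\<in>K. \<Sum>j\<in>K. f i * f j) = (\<Sum>k\<in>K. f k)^2"
    by (simp add: power2_eq_square sum_product)
  finally show ?thesis by simp
qed

lemma Q_decomp:
  fixes f :: "nat \<Rightarrow> real"
  assumes Kn: "KS p q1 \<subseteq> {..<n}"
  shows "(\<Sum>i<n. \<Sum>j<n. if adjI p q1 i j then (f i - f j)^2 else 0) =
    (\<Sum>i\<in>KS p q1. \<Sum>j\<in>KS p q1. (f i - f j)^2) + 2 * Tsum n p q1 f"
proof -
  let ?K = "KS p q1"
  define h where "h = (\<lambda>i j. if \<not> (i \<in> ?K \<and> j \<in> ?K) then (f i - f j)^2 else 0)"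
  have pw: "(if adjI p q1 i j then (f i - f j)^2 else 0) =
     (if i \<in> ?K then (if j \<in> ?K then (f i - f j)^2 else 0) else 0)
     + (if j = Suc i then h i j else 0) + (if i = Suc j then h i j else 0)" for i j
    unfolding adjI_def h_def by auto
  have S1: "(\<Sum>i<n. \<Sum>j<n. (if i \<in> ?K then (if j \<in> ?K then (f i - f j)^2 else 0) else 0))
      = (\<Sum>i\<in>?K. \<Sum>j\<in>?K. (f i - f j)^2)"
  proof -
    have KK: "{..<n} \<inter> ?K = ?K" using Kn by auto
    have R: "(\<Sum>j<n. if j \<in> ?K then g j else 0) = (\<Sum>j\<in>?K. g j)" for g :: "nat \<Rightarrow> real"
    proof -
      have "(\<Sum>j<n. if j \<in> ?K then g j else 0) = sum g ({..<n} \<inter> ?K)" by (simp add: sum.inter_restrict)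
      thus ?thesis unfolding KK .
    qed
    have "(\<Sum>i<n. \<Sum>j<n. (if i \<in> ?K then (if j \<in> ?K then (f i - f j)^2 else 0) else 0))
       = (\<Sum>i<n. if i \<in> ?K then (\<Sum>j<n. if j \<in> ?K then (f i - f j)^2 else 0) else 0)"
      by (intro sum.cong refl) auto
    also have "\<dots> = (\<Sum>i\<in>?K. (\<Sum>j<n. if j \<in> ?K then (f i - f j)^2 else 0))"
      by (rule R)
    also have "\<dots> = (\<Sum>i\<in>?K. \<Sum>j\<in>?K. (f i - f j)^2)"
      by (intro sum.cong refl R)
    finally show ?thesis .
  qed
  have S2: "(\<Sum>i<n. \<Sum>j<n. if j = Suc i then h i j else 0) = Tsum n p q1 f"
  proof -
    have "(\<Sum>i<n. \<Sum>j<n. if j = Suc i then h i j else 0) = (\<Sum>i<n. if Suc i < n then h i (Suc i) else 0)"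
      by (intro sum.cong refl) (simp add: sum.delta)
    also have "\<dots> = Tsum n p q1 f" unfolding Tsum_def h_def by (intro sum.cong refl) auto
    finally show ?thesis .
  qed
  have S3: "(\<Sum>i<n. \<Sum>j<n. if i = Suc j then h i j else 0) = Tsum n p q1 f"
  proof -
    have "(\<Sum>i<n. \<Sum>j<n. if i = Suc j then h i j else 0) = (\<Sum>j<n. \<Sum>i<n. if i = Suc j then h i j else 0)"
      by (rule sum.swap)
    also have "\<dots> = (\<Sum>j<n. if Suc j < n then h (Suc j) j else 0)"
      by (intro sum.cong refl) (simp add: sum.delta)
    also have "\<dots> = Tsum n p q1 f" unfolding Tsum_def h_def
      by (intro sum.cong refl) (auto simp: power2_commute)
    finally show ?thesis .
  qed
  have "(\<Sum>i<n. \<Sum>j<n. if adjI p q1 i j then (f i - f j)^2 else 0) =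
     (\<Sum>i<n. \<Sum>j<n. (if i \<in> ?K then (if j \<in> ?K then (f i - f j)^2 else 0) else 0))
     + (\<Sum>i<n. \<Sum>j<n. if j = Suc i then h i j else 0) + (\<Sum>i<n. \<Sum>j<n. if i = Suc j then h i j else 0)"
    unfolding pw by (simp only: sum.distrib)
  also have "\<dots> = (\<Sum>i\<in>?K. \<Sum>j\<in>?K. (f i - f j)^2) + 2 * Tsum n p q1 f"
    unfolding S1 S2 S3 by simp
  finally show ?thesis .
qed

lemma shift_sum:
  fixes g :: "nat \<Rightarrow> real"
  shows "(\<Sum>i<n. if Suc i < n \<and> P i then g (Suc i) else 0) = (\<Sum>k<n. if 0 < k \<and> P (k - 1) then g k else 0)"
proof (cases n)
  case 0
  then show ?thesis by simp
next
  case (Suc m)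
  have "(\<Sum>i<n. if Suc i < n \<and> P i then g (Suc i) else 0) = (\<Sum>i<m. if P i then g (Suc i) else 0)"
    unfolding Suc by (simp add: sum.lessThan_Suc)
  also have "\<dots> = (\<Sum>k<n. if 0 < k \<and> P (k - 1) then g k else 0)"
    unfolding Suc sum.lessThan_Suc_shift by simp
  finally show ?thesis .
qed

definition omega :: "nat \<Rightarrow> nat \<Rightarrow> nat \<Rightarrow> real" where
  "omega p q1 k = (if k \<in> KS p q1 then (if k = q1 - 1 \<or> k = q1 + p - 2 then 1 else 0) else 2)"

lemma T_upper:
  fixes f :: "nat \<Rightarrow> real"
  assumes "q1 \<ge> 2" "q2 \<ge> 2" "p \<ge> 3" and n: "n = ckc_n p q1 q2"
  shows "Tsum n p q1 f \<le> 2 * (\<Sum>k<n. omega p q1 k * (f k)^2)"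
proof -
  let ?K = "KS p q1"
  define c where "c = (\<lambda>i. Suc i < n \<and> \<not> (i \<in> ?K \<and> Suc i \<in> ?K))"
  have "Tsum n p q1 f \<le> (\<Sum>i<n. if c i then 2 * (f i)^2 + 2 * (f (Suc i))^2 else 0)"
    unfolding Tsum_def c_def
  proof (intro sum_mono)
    fix i
    have "(f i - f (Suc i))^2 \<le> 2 * (f i)^2 + 2 * (f (Suc i))^2"
      using sum_squares_ge_zero[of "f i + f (Suc i)" 0] by (simp add: power2_eq_square algebra_simps)
    thus "(if Suc i < n \<and> \<not> (i \<in> ?K \<and> Suc i \<in> ?K) then (f i - f (Suc i))^2 else 0)
         \<le> (if Suc i < n \<and> \<not> (i \<in> ?K \<and> Suc i \<in> ?K) then 2 * (f i)^2 + 2 * (f (Suc i))^2 else 0)"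
      by auto
  qed
  also have "\<dots> = (\<Sum>i<n. 2 * (if c i then (f i)^2 else 0) + 2 * (if c i then (f (Suc i))^2 else 0))"
    by (intro sum.cong refl) auto
  also have "\<dots> = 2 * (\<Sum>i<n. if c i then (f i)^2 else 0) + 2 * (\<Sum>i<n. if c i then (f (Suc i))^2 else 0)"
    by (simp add: sum.distrib sum_distrib_left)
  also have "(\<Sum>i<n. if c i then (f (Suc i))^2 else 0) = (\<Sum>k<n. if 0 < k \<and> c (k - 1) then (f k)^2 else 0)"
  proof -
    have "(\<Sum>i<n. if c i then (f (Suc i))^2 else 0) =
        (\<Sum>i<n. if Suc i < n \<and> \<not> (i \<in> ?K \<and> Suc i \<in> ?K) then (f (Suc i))^2 else 0)"
      unfolding c_def ..
    also have "\<dots> = (\<Sum>k<n. if 0 < k \<and> \<not> (k - 1 \<in> ?K \<and> Suc (k - 1) \<in> ?K) then (f k)^2 else 0)"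
      by (rule shift_sum)
    also have "\<dots> = (\<Sum>k<n. if 0 < k \<and> c (k - 1) then (f k)^2 else 0)"
      unfolding c_def by (intro sum.cong refl) auto
    finally show ?thesis .
  qed
  also have "2 * (\<Sum>i<n. if c i then (f i)^2 else 0) + 2 * (\<Sum>k<n. if 0 < k \<and> c (k - 1) then (f k)^2 else 0)
      = 2 * (\<Sum>k<n. ((if c k then 1 else 0) + (if 0 < k \<and> c (k - 1) then 1 else 0)) * (f k)^2)"
  proof -
    have "(\<Sum>k<n. ((if c k then 1 else 0) + (if 0 < k \<and> c (k - 1) then 1 else 0)) * (f k)^2)
      = (\<Sum>k<n. (if c k then (f k)^2 else 0) + (if 0 < k \<and> c (k - 1) then (f k)^2 else 0))"
      by (intro sum.cong refl) auto
    thus ?thesis by (simp add: sum.distrib)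
  qed
  also have "\<dots> \<le> 2 * (\<Sum>k<n. omega p q1 k * (f k)^2)"
  proof -
    have "(\<Sum>k<n. ((if c k then 1 else 0) + (if 0 < k \<and> c (k - 1) then 1 else 0)) * (f k)^2)
        \<le> (\<Sum>k<n. omega p q1 k * (f k)^2)"
    proof (intro sum_mono mult_right_mono)
      fix k assume k: "k \<in> {..<n}"
      show "(if c k then 1 else 0) + (if 0 < k \<and> c (k - 1) then 1 else 0) \<le> omega p q1 k"
      proof (cases "k \<in> ?K")
        case False
        hence "omega p q1 k = 2" unfolding omega_def by simp
        thus ?thesis by simp
      next
        case True
        hence kK: "q1 - 1 \<le> k" "k \<le> q1 + p - 2" unfolding KS_def by auto
        consider (a) "k = q1 - 1" | (b) "k = q1 + p - 2" | (c) "q1 - 1 < k \<and> k < q1 + p - 2"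
          using kK by linarith
        thus ?thesis
        proof cases
          case a
          have "Suc k \<in> ?K" using a assms(1,3) unfolding KS_def by auto
          hence "\<not> c k" using True unfolding c_def by auto
          moreover have "omega p q1 k = 1" using a True unfolding omega_def by simp
          ultimately show ?thesis by simp
        next
          case b
          have "k - 1 \<in> ?K" "Suc (k - 1) \<in> ?K" using b assms(1,3) unfolding KS_def by auto
          hence "\<not> c (k - 1)" unfolding c_def by auto
          moreover have "omega p q1 k = 1" using b True unfolding omega_def by simp
          ultimately show ?thesis by simp
        next
          case c
          have "Suc k \<in> ?K" "k - 1 \<in> ?K" "Suc (k - 1) \<in> ?K" using c unfolding KS_def by auto
          hence "\<not> c k" "\<not> c (k - 1)" using True unfolding c_def by auto
          moreover have "omega p q1 k = 0" using c True unfolding omega_def by auto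
          ultimately show ?thesis by simp
        qed
      qed
    qed simp
    thus ?thesis by simp
  qed
  finally show ?thesis .
qed

lemma T_nonneg: "Tsum n p q1 f \<ge> 0"
  unfolding Tsum_def by (intro sum_nonneg) auto

lemma T_lower2:
  fixes f :: "nat \<Rightarrow> real"
  assumes "i0 \<noteq> i1" "Suc i0 < n" "Suc i1 < n"
    "\<not> (i0 \<in> KS p q1 \<and> Suc i0 \<in> KS p q1)" "\<not> (i1 \<in> KS p q1 \<and> Suc i1 \<in> KS p q1)"
  shows "(f i0 - f (Suc i0))^2 + (f i1 - f (Suc i1))^2 \<le> Tsum n p q1 f"
proof -
  let ?g = "\<lambda>i. if Suc i < n \<and> \<not> (i \<in> KS p q1 \<and> Suc i \<in> KS p q1) then (f i - f (Suc i))^2 else 0"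
  have "(\<Sum>i\<in>{i0, i1}. ?g i) \<le> (\<Sum>i<n. ?g i)"
    using assms by (intro sum_mono2) auto
  thus ?thesis using assms unfolding Tsum_def by simp
qed

lemma lap_quad2:
  assumes "q1 \<ge> 2" "q2 \<ge> 2" "p \<ge> 3" "x \<in> carrier_vec (ckc_n p q1 q2)"
  shows "x \<bullet> (ckc_laplacian p q1 q2 *\<^sub>v x) =
    real p * (\<Sum>k\<in>KS p q1. (x $ k)^2) - (\<Sum>k\<in>KS p q1. x $ k)^2 + Tsum (ckc_n p q1 q2) p q1 (\<lambda>k. x $ k)"
proof -
  have Kn: "KS p q1 \<subseteq> {..<ckc_n p q1 q2}" using assms unfolding KS_def ckc_n_def by auto
  have "2 * (x \<bullet> (ckc_laplacian p q1 q2 *\<^sub>v x)) =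
    2 * (real p * (\<Sum>k\<in>KS p q1. (x $ k)^2) - (\<Sum>k\<in>KS p q1. x $ k)^2) + 2 * Tsum (ckc_n p q1 q2) p q1 (\<lambda>k. x $ k)"
    unfolding lap_quad[OF assms] Q_decomp[OF Kn] K_sq_sum[OF finite_subset[OF Kn finite_lessThan]]
    using card_KS[of q1 p] assms by simp
  thus ?thesis by simp
qed

lemma lcomb_delta:
  assumes "\<And>k. k < n \<Longrightarrow> Q k \<Longrightarrow> \<phi> k < d"
  shows "lcomb n d (\<lambda>j k. if Q k \<and> \<phi> k = j then 1 else 0) c = vec n (\<lambda>k. if Q k then c (\<phi> k) else 0)"
proof (rule eq_vecI)
  fix k assume "k < dim_vec (vec n (\<lambda>k. if Q k then c (\<phi> k) else 0))"
  hence k: "k < n" by simp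
  have "(\<Sum>j<d. c j * (if Q k \<and> \<phi> k = j then 1 else 0)) = (\<Sum>j<d. if Q k then (if j = \<phi> k then c j else 0) else 0)"
    by (intro sum.cong refl) auto
  also have "\<dots> = (if Q k then c (\<phi> k) else 0)"
    using assms[OF k] by (cases "Q k") auto
  finally show "lcomb n d (\<lambda>j k. if Q k \<and> \<phi> k = j then 1 else 0) c $ k = vec n (\<lambda>k. if Q k then c (\<phi> k) else 0) $ k"
    unfolding lcomb_def using k by simp
qed (simp add: lcomb_def)

lemma sum_K_lt:
  fixes g :: "nat \<Rightarrow> real"
  assumes "K \<subseteq> {..<n}"
  shows "(\<Sum>k\<in>K. g k) = (\<Sum>k<n. if k \<in> K then g k else 0)"
proof -
  have KK: "{..<n} \<inter> K = K" using assms by auto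
  have "(\<Sum>k<n. if k \<in> K then g k else 0) = sum g ({..<n} \<inter> K)" by (simp add: sum.inter_restrict)
  thus ?thesis unfolding KK by simp
qed

lemma KS_sub: "q1 \<ge> 2 \<Longrightarrow> q2 \<ge> 2 \<Longrightarrow> p \<ge> 3 \<Longrightarrow> KS p q1 \<subseteq> {..<ckc_n p q1 q2}"
  unfolding KS_def ckc_n_def by auto

lemma sqnorm: fixes x :: "real vec" assumes "x \<in> carrier_vec n" shows "x \<bullet> x = (\<Sum>k<n. (x $ k)^2)"
proof -
  have "x \<bullet> x = (\<Sum>k<n. x $ k * x $ k)" unfolding scalar_prod_def using assms by (simp add: atLeast0LessThan)
  thus ?thesis by (simp add: power2_eq_square)
qed

lemma quad_upper:
  assumes q: "q1 \<ge> 2" "q2 \<ge> 2" "p \<ge> 3" and x: "x \<in> carrier_vec (ckc_n p q1 q2)"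
  shows "x \<bullet> (ckc_laplacian p q1 q2 *\<^sub>v x) \<le>
    (\<Sum>k<ckc_n p q1 q2. ((if k \<in> KS p q1 then real p else 0) + 2 * omega p q1 k) * (x $ k)^2)
      - (\<Sum>k\<in>KS p q1. x $ k)^2"
proof -
  let ?n = "ckc_n p q1 q2"
  have "real p * (\<Sum>k\<in>KS p q1. (x $ k)^2) = (\<Sum>k<?n. (if k \<in> KS p q1 then real p else 0) * (x $ k)^2)"
    unfolding sum_K_lt[OF KS_sub[OF q]] sum_distrib_left by (intro sum.cong refl) auto
  moreover have "Tsum ?n p q1 (\<lambda>k. x $ k) \<le> 2 * (\<Sum>k<?n. omega p q1 k * (x $ k)^2)"
    by (rule T_upper[OF q refl])
  moreover have "(\<Sum>k<?n. ((if k \<in> KS p q1 then real p else 0) + 2 * omega p q1 k) * (x $ k)^2)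
     = (\<Sum>k<?n. (if k \<in> KS p q1 then real p else 0) * (x $ k)^2) + 2 * (\<Sum>k<?n. omega p q1 k * (x $ k)^2)"
    by (simp add: sum.distrib sum_distrib_left distrib_right mult.assoc)
  ultimately show ?thesis unfolding lap_quad2[OF q x] by linarith
qed

lemma quad_nonneg:
  assumes q: "q1 \<ge> 2" "q2 \<ge> 2" "p \<ge> 3" and x: "x \<in> carrier_vec (ckc_n p q1 q2)"
  shows "x \<bullet> (ckc_laplacian p q1 q2 *\<^sub>v x) \<ge> 0"
proof -
  have "0 \<le> (\<Sum>i<ckc_n p q1 q2. \<Sum>j<ckc_n p q1 q2. if adjI p q1 i j then (x $ i - x $ j)^2 else 0)"
    by (intro sum_nonneg) auto
  thus ?thesis using lap_quad[OF q x] by simp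
qed

lemma all_from_card:
  assumes "n \<le> card {i. i < n \<and> P i}" "i < n"
  shows "P i"
proof -
  have "{i. i < n \<and> P i} = {..<n}"
    by (rule card_seteq) (use assms(1) in auto)
  thus ?thesis using assms(2) by auto
qed

lemma weighted_mono:
  fixes a b f :: "nat \<Rightarrow> real"
  assumes "\<And>k. k < n \<Longrightarrow> a k * (f k)^2 \<le> b k * (f k)^2"
  shows "(\<Sum>k<n. a k * (f k)^2) \<le> (\<Sum>k<n. b k * (f k)^2)"
  using assms by (intro sum_mono) auto

context
  fixes p q1 q2 :: nat and U D :: "real mat"
  assumes q: "q1 \<ge> 2" "q2 \<ge> 2" "p \<ge> 6"
    and S: "sdecomp (ckc_n p q1 q2) (ckc_laplacian p q1 q2) U D"
begin

lemma q3: "q1 \<ge> 2" "q2 \<ge> 2" "p \<ge> 3" using q by auto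

abbreviation "nn \<equiv> ckc_n p q1 q2"
abbreviation "LL \<equiv> ckc_laplacian p q1 q2"

lemma app_all_le: "i < nn \<Longrightarrow> D $$ (i,i) \<le> real p + 2"
proof -
  define w :: "nat \<Rightarrow> nat \<Rightarrow> real" where "w = (\<lambda>j k. if True \<and> id k = j then 1 else 0)"
  have lc: "lcomb nn nn w c = vec nn (\<lambda>k. if True then c (id k) else 0)" for c :: "nat \<Rightarrow> real"
    unfolding w_def by (rule lcomb_delta) auto
  have "nn \<le> card {i. i < nn \<and> D $$ (i,i) \<le> real p + 2}"
  proof (rule rayleigh_le[OF S])
    fix c :: "nat \<Rightarrow> real" assume c: "\<exists>j<nn. c j \<noteq> 0"
    define x where "x = lcomb nn nn w c"
    have x: "x \<in> carrier_vec nn" unfolding x_def by simp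
    have xk: "x $ k = c k" if "k < nn" for k unfolding x_def lc using that by simp
    have "x \<noteq> 0\<^sub>v nn" using c xk by (metis index_zero_vec(1))
    moreover have "x \<bullet> (LL *\<^sub>v x) \<le> (real p + 2) * (x \<bullet> x)"
    proof -
      have "x \<bullet> (LL *\<^sub>v x) \<le> (\<Sum>k<nn. ((if k \<in> KS p q1 then real p else 0) + 2 * omega p q1 k) * (x $ k)^2)"
        using quad_upper[OF q3 x] by (smt (verit) zero_le_power2)
      also have "\<dots> \<le> (\<Sum>k<nn. (real p + 2) * (x $ k)^2)"
        by (rule weighted_mono, rule mult_right_mono) (use q in \<open>auto simp: omega_def\<close>)
      also have "\<dots> = (real p + 2) * (x \<bullet> x)" unfolding sqnorm[OF x] sum_distrib_left ..
      finally show ?thesis .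
    qed
    ultimately show "lcomb nn nn w c \<noteq> 0\<^sub>v nn \<and>
       lcomb nn nn w c \<bullet> (LL *\<^sub>v lcomb nn nn w c) \<le> (real p + 2) * (lcomb nn nn w c \<bullet> lcomb nn nn w c)"
      unfolding x_def by simp
  qed
  thus "i < nn \<Longrightarrow> D $$ (i,i) \<le> real p + 2" by (rule all_from_card)
qed

lemma app_all_ge: "i < nn \<Longrightarrow> D $$ (i,i) \<ge> 0"
proof -
  define w :: "nat \<Rightarrow> nat \<Rightarrow> real" where "w = (\<lambda>j k. if True \<and> id k = j then 1 else 0)"
  have lc: "lcomb nn nn w c = vec nn (\<lambda>k. if True then c (id k) else 0)" for c :: "nat \<Rightarrow> real"
    unfolding w_def by (rule lcomb_delta) auto
  have "nn \<le> card {i. i < nn \<and> D $$ (i,i) \<ge> 0}"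
  proof (rule rayleigh_ge[OF S])
    fix c :: "nat \<Rightarrow> real" assume c: "\<exists>j<nn. c j \<noteq> 0"
    define x where "x = lcomb nn nn w c"
    have x: "x \<in> carrier_vec nn" unfolding x_def by simp
    have xk: "x $ k = c k" if "k < nn" for k unfolding x_def lc using that by simp
    have "x \<noteq> 0\<^sub>v nn" using c xk by (metis index_zero_vec(1))
    moreover have "x \<bullet> (LL *\<^sub>v x) \<ge> 0 * (x \<bullet> x)" using quad_nonneg[OF q3 x] by simp
    ultimately show "lcomb nn nn w c \<noteq> 0\<^sub>v nn \<and>
       lcomb nn nn w c \<bullet> (LL *\<^sub>v lcomb nn nn w c) \<ge> 0 * (lcomb nn nn w c \<bullet> lcomb nn nn w c)"
      unfolding x_def by simp
  qed
  thus "i < nn \<Longrightarrow> D $$ (i,i) \<ge> 0" by (rule all_from_card)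
qed

end

lemma finite_KS[simp]: "finite (KS p q1)" unfolding KS_def by simp

lemma zero_off:
  fixes g :: "nat \<Rightarrow> real"
  assumes "K \<subseteq> {..<n}" "\<And>k. k < n \<Longrightarrow> k \<notin> K \<Longrightarrow> g k = 0"
  shows "(\<Sum>k<n. g k) = (\<Sum>k\<in>K. g k)"
proof -
  have "sum g K = sum g {..<n}" by (rule sum.mono_neutral_left) (use assms in auto)
  thus ?thesis by simp
qed

context
  fixes p q1 q2 :: nat and U D :: "real mat"
  assumes q: "q1 \<ge> 2" "q2 \<ge> 2" "p \<ge> 6"
    and S: "sdecomp (ckc_n p q1 q2) (ckc_laplacian p q1 q2) U D"
begin

lemma q3': "q1 \<ge> 2" "q2 \<ge> 2" "p \<ge> 3" using q by auto

abbreviation "nn' \<equiv> ckc_n p q1 q2"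
abbreviation "LL' \<equiv> ckc_laplacian p q1 q2"

lemma app_le4: "q1 + q2 - 1 \<le> card {i. i < nn' \<and> D $$ (i,i) \<le> 4}"
proof -
  define d where "d = q1 + q2 - 1"
  define \<phi> where "\<phi> = (\<lambda>k. if k < q1 - 1 then k else if k \<le> q1 + p - 2 then q1 - 1 else k - (p - 1))"
  define w :: "nat \<Rightarrow> nat \<Rightarrow> real" where "w = (\<lambda>j k. if True \<and> \<phi> k = j then 1 else 0)"
  have lc: "lcomb nn' d w c = vec nn' (\<lambda>k. if True then c (\<phi> k) else 0)" for c :: "nat \<Rightarrow> real"
    unfolding w_def by (rule lcomb_delta) (use q in \<open>auto simp: \<phi>_def d_def ckc_n_def\<close>)
  have "d \<le> card {i. i < nn' \<and> D $$ (i,i) \<le> 4}"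
  proof (rule rayleigh_le[OF S])
    fix c :: "nat \<Rightarrow> real" assume c: "\<exists>j<d. c j \<noteq> 0"
    define x where "x = lcomb nn' d w c"
    have x: "x \<in> carrier_vec nn'" unfolding x_def by simp
    have xk: "x $ k = c (\<phi> k)" if "k < nn'" for k unfolding x_def lc using that by simp
    from c obtain j where j: "j < d" "c j \<noteq> 0" by blast
    define k where "k = (if j < q1 - 1 then j else if j = q1 - 1 then q1 - 1 else j + (p - 1))"
    have k: "k < nn'" "\<phi> k = j" using j q unfolding k_def \<phi>_def d_def ckc_n_def by auto
    have "x \<noteq> 0\<^sub>v nn'" using xk[OF k(1)] k j by (metis index_zero_vec(1))
    moreover have "x \<bullet> (LL' *\<^sub>v x) \<le> 4 * (x \<bullet> x)"
    proof -
      let ?K = "KS p q1"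
      define t where "t = c (q1 - 1)"
      have Kn: "?K \<subseteq> {..<nn'}" by (rule KS_sub[OF q3'])
      have xK: "x $ k = t" if "k \<in> ?K" for k
        using that Kn xk[of k] unfolding t_def \<phi>_def KS_def by auto
      have cK: "card ?K = p" using card_KS[of q1 p] q by simp
      have s1: "(\<Sum>k\<in>?K. x $ k) = real p * t" using xK cK by simp
      have s2: "(\<Sum>k<nn'. (if k \<in> ?K then real p else 0) * (x $ k)^2) = real p * real p * t^2"
      proof -
        have "(\<Sum>k<nn'. (if k \<in> ?K then real p else 0) * (x $ k)^2) = (\<Sum>k<nn'. if k \<in> ?K then real p * (x $ k)^2 else 0)"
          by (intro sum.cong refl) auto
        also have "\<dots> = (\<Sum>k\<in>?K. real p * (x $ k)^2)" using sum_K_lt[OF Kn] by simp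
        also have "\<dots> = real p * real p * t^2" using xK cK by simp
        finally show ?thesis .
      qed
      have "x \<bullet> (LL' *\<^sub>v x) \<le> (\<Sum>k<nn'. ((if k \<in> ?K then real p else 0) + 2 * omega p q1 k) * (x $ k)^2)
         - (\<Sum>k\<in>?K. x $ k)^2" by (rule quad_upper[OF q3' x])
      also have "\<dots> = 2 * (\<Sum>k<nn'. omega p q1 k * (x $ k)^2)"
        unfolding distrib_right sum.distrib s2 s1
        by (simp add: sum_distrib_left mult.assoc power2_eq_square)
      also have "\<dots> \<le> 2 * (\<Sum>k<nn'. 2 * (x $ k)^2)"
        by (intro mult_left_mono weighted_mono mult_right_mono) (auto simp: omega_def)
      also have "\<dots> = 4 * (x \<bullet> x)" unfolding sqnorm[OF x] by (simp add: sum_distrib_left)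
      finally show ?thesis .
    qed
    ultimately show "lcomb nn' d w c \<noteq> 0\<^sub>v nn' \<and>
       lcomb nn' d w c \<bullet> (LL' *\<^sub>v lcomb nn' d w c) \<le> 4 * (lcomb nn' d w c \<bullet> lcomb nn' d w c)"
      unfolding x_def by simp
  qed
  thus ?thesis unfolding d_def .
qed

lemma app_lep: "nn' - 2 \<le> card {i. i < nn' \<and> D $$ (i,i) \<le> real p}"
proof -
  define d where "d = nn' - 2"
  define Q where "Q = (\<lambda>k. k \<noteq> q1 - 1 \<and> k \<noteq> q1 + p - 2)"
  define \<phi> where "\<phi> = (\<lambda>k. if k < q1 - 1 then k else if k < q1 + p - 2 then k - 1 else k - 2)"
  define w :: "nat \<Rightarrow> nat \<Rightarrow> real" where "w = (\<lambda>j k. if Q k \<and> \<phi> k = j then 1 else 0)"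
  have lc: "lcomb nn' d w c = vec nn' (\<lambda>k. if Q k then c (\<phi> k) else 0)" for c :: "nat \<Rightarrow> real"
    unfolding w_def by (rule lcomb_delta) (use q in \<open>auto simp: \<phi>_def d_def ckc_n_def Q_def\<close>)
  have "d \<le> card {i. i < nn' \<and> D $$ (i,i) \<le> real p}"
  proof (rule rayleigh_le[OF S])
    fix c :: "nat \<Rightarrow> real" assume c: "\<exists>j<d. c j \<noteq> 0"
    define x where "x = lcomb nn' d w c"
    have x: "x \<in> carrier_vec nn'" unfolding x_def by simp
    have xk: "x $ k = (if Q k then c (\<phi> k) else 0)" if "k < nn'" for k unfolding x_def lc using that by simp
    from c obtain j where j: "j < d" "c j \<noteq> 0" by blast
    define k where "k = (if j < q1 - 1 then j else if j < q1 + p - 3 then j + 1 else j + 2)"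
    have k: "k < nn'" "Q k" "\<phi> k = j" using j q unfolding k_def \<phi>_def d_def ckc_n_def Q_def by auto
    have "x \<noteq> 0\<^sub>v nn'" using xk[OF k(1)] k j by (metis index_zero_vec(1))
    moreover have "x \<bullet> (LL' *\<^sub>v x) \<le> real p * (x \<bullet> x)"
    proof -
      let ?K = "KS p q1"
      have "x \<bullet> (LL' *\<^sub>v x) \<le> (\<Sum>k<nn'. ((if k \<in> ?K then real p else 0) + 2 * omega p q1 k) * (x $ k)^2)
         - (\<Sum>k\<in>?K. x $ k)^2" by (rule quad_upper[OF q3' x])
      also have "\<dots> \<le> (\<Sum>k<nn'. ((if k \<in> ?K then real p else 0) + 2 * omega p q1 k) * (x $ k)^2)" by simp
      also have "\<dots> \<le> (\<Sum>k<nn'. real p * (x $ k)^2)"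
      proof (rule weighted_mono)
        fix k assume kn: "k < nn'"
        show "((if k \<in> ?K then real p else 0) + 2 * omega p q1 k) * (x $ k)^2 \<le> real p * (x $ k)^2"
        proof (cases "Q k")
          case True
          have "(if k \<in> ?K then real p else 0) + 2 * omega p q1 k \<le> real p"
            using True q unfolding omega_def Q_def by auto
          thus ?thesis by (intro mult_right_mono) auto
        next
          case False
          thus ?thesis using xk[OF kn] by simp
        qed
      qed
      also have "\<dots> = real p * (x \<bullet> x)" unfolding sqnorm[OF x] by (simp add: sum_distrib_left)
      finally show ?thesis .
    qed
    ultimately show "lcomb nn' d w c \<noteq> 0\<^sub>v nn' \<and>
       lcomb nn' d w c \<bullet> (LL' *\<^sub>v lcomb nn' d w c) \<le> real p * (lcomb nn' d w c \<bullet> lcomb nn' d w c)"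
      unfolding x_def by simp
  qed
  thus ?thesis unfolding d_def .
qed

lemma app_gep: "p - 1 \<le> card {i. i < nn' \<and> D $$ (i,i) \<ge> real p}"
proof -
  let ?K = "KS p q1"
  define d where "d = p - 1"
  define u where "u = q1 - 1"
  define wv where "wv = q1 + p - 2"
  define w :: "nat \<Rightarrow> nat \<Rightarrow> real" where "w = (\<lambda>j k. (if k = u + j then 1 else 0) - (if k = wv then 1 else 0))"
  have Kn: "?K \<subseteq> {..<nn'}" by (rule KS_sub[OF q3'])
  have uK: "u + j \<in> ?K" if "j < d" for j using that q unfolding u_def d_def KS_def by auto
  have wK: "wv \<in> ?K" using q unfolding wv_def KS_def by auto
  have uw: "u + j \<noteq> wv" if "j < d" for j using that q unfolding u_def d_def wv_def by auto
  show ?thesis unfolding d_def[symmetric]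
  proof (rule rayleigh_ge[OF S])
    fix c :: "nat \<Rightarrow> real" assume c: "\<exists>j<d. c j \<noteq> 0"
    define x where "x = lcomb nn' d w c"
    have x: "x \<in> carrier_vec nn'" unfolding x_def by simp
    have xk: "x $ k = (\<Sum>j<d. c j * w j k)" if "k < nn'" for k unfolding x_def lcomb_def using that by simp
    have off: "x $ k = 0" if "k < nn'" "k \<notin> ?K" for k
      unfolding xk[OF that(1)] using that uK wK by (intro sum.neutral) (auto simp: w_def)
    have sK: "(\<Sum>k\<in>?K. x $ k) = 0"
    proof -
      have "(\<Sum>k\<in>?K. x $ k) = (\<Sum>k\<in>?K. \<Sum>j<d. c j * w j k)" using Kn xk by (intro sum.cong) auto
      also have "\<dots> = (\<Sum>j<d. \<Sum>k\<in>?K. c j * w j k)" by (rule sum.swap)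
      also have "\<dots> = (\<Sum>j<d. c j * ((\<Sum>k\<in>?K. if k = u + j then 1 else 0) - (\<Sum>k\<in>?K. if k = wv then 1 else 0)))"
        unfolding w_def by (intro sum.cong refl) (simp only: right_diff_distrib sum_distrib_left sum_subtractf)
      also have "\<dots> = 0"
      proof (intro sum.neutral ballI)
        fix j assume "j \<in> {..<d}"
        hence j: "j < d" by simp
        have "(\<Sum>k\<in>?K. if k = u + j then 1 else 0) = (1::real)"
          using uK[OF j] by (simp only: sum.delta finite_KS) simp
        moreover have "(\<Sum>k\<in>?K. if k = wv then 1 else 0) = (1::real)"
          using wK by (simp only: sum.delta finite_KS) simp
        ultimately show "c j * ((\<Sum>k\<in>?K. if k = u + j then 1 else 0) - (\<Sum>k\<in>?K. if k = wv then 1 else 0)) = 0"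
          by simp
      qed
      finally show ?thesis .
    qed
    from c obtain j0 where j0: "j0 < d" "c j0 \<noteq> 0" by blast
    have "x $ (u + j0) = c j0"
    proof -
      have kn: "u + j0 < nn'" using uK[OF j0(1)] Kn by auto
      have "x $ (u + j0) = (\<Sum>j<d. if j = j0 then c j else 0)"
        unfolding xk[OF kn] w_def using uw[OF j0(1)] by (intro sum.cong refl) auto
      thus ?thesis using j0 by simp
    qed
    hence "x \<noteq> 0\<^sub>v nn'" using j0 uK[OF j0(1)] Kn by (metis index_zero_vec(1) lessThan_iff subsetD)
    moreover have "x \<bullet> (LL' *\<^sub>v x) \<ge> real p * (x \<bullet> x)"
    proof -
      have "real p * (x \<bullet> x) = real p * (\<Sum>k\<in>?K. (x $ k)^2)"
        unfolding sqnorm[OF x] using zero_off[OF Kn, of "\<lambda>k. (x $ k)^2"] off by simp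
      also have "\<dots> \<le> x \<bullet> (LL' *\<^sub>v x)"
        unfolding lap_quad2[OF q3' x] sK using T_nonneg[of nn' p q1 "\<lambda>k. x $ k"] by simp
      finally show ?thesis .
    qed
    ultimately show "lcomb nn' d w c \<noteq> 0\<^sub>v nn' \<and>
       lcomb nn' d w c \<bullet> (LL' *\<^sub>v lcomb nn' d w c) \<ge> real p * (lcomb nn' d w c \<bullet> lcomb nn' d w c)"
      unfolding x_def by simp
  qed
qed

lemma app_gtp: "2 \<le> card {i. i < nn' \<and> D $$ (i,i) > real p}"
proof -
  let ?K = "KS p q1"
  define u where "u = q1 - 1"
  define wv where "wv = q1 + p - 2"
  define w :: "nat \<Rightarrow> nat \<Rightarrow> real" where "w = (\<lambda>j k. if j = 0 then (if k = u then 1 else 0) - (if k = q1 then 1 else 0)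
       else (if k = wv then 1 else 0) - (if k = q1 then 1 else 0))"
  have Kn: "?K \<subseteq> {..<nn'}" by (rule KS_sub[OF q3'])
  have uK: "u \<in> ?K" "q1 \<in> ?K" "wv \<in> ?K" using q unfolding u_def wv_def KS_def by auto
  have neq: "u \<noteq> q1" "wv \<noteq> q1" "u \<noteq> wv" using q unfolding u_def wv_def by auto
  show ?thesis
  proof (rule rayleigh_gt[OF S])
    fix c :: "nat \<Rightarrow> real" assume c: "\<exists>j<2. c j \<noteq> 0"
    define x where "x = lcomb nn' 2 w c"
    have x: "x \<in> carrier_vec nn'" unfolding x_def by simp
    have xk: "x $ k = c 0 * ((if k = u then 1 else 0) - (if k = q1 then 1 else 0))
        + c 1 * ((if k = wv then 1 else 0) - (if k = q1 then 1 else 0))" if "k < nn'" for k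
      unfolding x_def lcomb_def w_def using that by (simp add: numeral_2_eq_2)
    have off: "x $ k = 0" if "k < nn'" "k \<notin> ?K" for k
      unfolding xk[OF that(1)] using that uK by auto
    have sK: "(\<Sum>k\<in>?K. x $ k) = 0"
    proof -
      have "(\<Sum>k\<in>?K. x $ k) = (\<Sum>k\<in>?K. c 0 * ((if k = u then 1 else 0) - (if k = q1 then 1 else 0))
        + c 1 * ((if k = wv then 1 else 0) - (if k = q1 then 1 else 0)))" using Kn xk by (intro sum.cong) auto
      also have "\<dots> = 0" using uK by (simp add: sum.distrib sum_subtractf sum.delta flip: sum_distrib_left)
      finally show ?thesis .
    qed
    have n1: "q1 - 2 < nn'" "u < nn'" "wv < nn'" "Suc wv < nn'" using q unfolding u_def wv_def ckc_n_def by auto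
    have e1: "q1 - 2 \<noteq> u" "q1 - 2 \<noteq> q1" "q1 - 2 \<noteq> wv" "Suc wv \<noteq> u" "Suc wv \<noteq> q1" "Suc wv \<noteq> wv"
      using q unfolding u_def wv_def by auto
    have su: "Suc (q1 - 2) = u" using q unfolding u_def by auto
    have v1: "x $ (q1 - 2) = 0" "x $ u = c 0" "x $ wv = c 1" "x $ (Suc wv) = 0"
      by (simp_all only: xk[OF n1(1)] xk[OF n1(2)] xk[OF n1(3)] xk[OF n1(4)] e1 neq neq[symmetric] if_False if_True) simp_all
    have Tl: "(x $ (q1 - 2) - x $ (Suc (q1 - 2)))^2 + (x $ wv - x $ (Suc wv))^2 \<le> Tsum nn' p q1 (\<lambda>k. x $ k)"
      by (rule T_lower2) (use q in \<open>auto simp: wv_def KS_def ckc_n_def\<close>)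
    have pos: "(c 0)^2 + (c 1)^2 > 0"
    proof -
      from c obtain j where "j < 2" "c j \<noteq> 0" by blast
      hence "c 0 \<noteq> 0 \<or> c 1 \<noteq> 0" by (cases j) (auto simp: numeral_2_eq_2 less_Suc_eq)
      thus ?thesis by (metis add_pos_nonneg add_nonneg_pos power2_less_0 not_less zero_less_power2)
    qed
    have "real p * (x \<bullet> x) = real p * (\<Sum>k\<in>?K. (x $ k)^2)"
      unfolding sqnorm[OF x] using zero_off[OF Kn, of "\<lambda>k. (x $ k)^2"] off by simp
    also have "\<dots> < x \<bullet> (LL' *\<^sub>v x)"
      unfolding lap_quad2[OF q3' x] sK using Tl v1 pos unfolding su by simp
    finally show "lcomb nn' 2 w c \<bullet> (LL' *\<^sub>v lcomb nn' 2 w c) > real p * (lcomb nn' 2 w c \<bullet> lcomb nn' 2 w c)"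
      unfolding x_def by simp
  qed
qed

end

lemma mset_split3:
  assumes "\<forall>x\<in>set xs. (P1 x \<and> \<not> P2 x \<and> \<not> P3 x) \<or> (\<not> P1 x \<and> P2 x \<and> \<not> P3 x) \<or> (\<not> P1 x \<and> \<not> P2 x \<and> P3 x)"
  shows "mset xs = mset (filter P1 xs) + mset (filter P2 xs) + mset (filter P3 xs)"
  using assms by (induction xs) auto

theorem proposition15:
  fixes p q1 q2 :: nat
  assumes "p \<ge> 6" and "q1 \<ge> 2" and "q2 \<ge> 2"
  shows "\<exists>as :: real list.
           char_poly (ckc_laplacian p q1 q2) = (\<Prod>a\<leftarrow>as. [:- a, 1:]) \<and>
           (\<exists>l1 l2 M.
              mset as = replicate_mset (p - 3) (real p) + {#l1, l2#} + M \<and>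
              real p < l1 \<and> l1 \<le> real p + 2 \<and>
              real p < l2 \<and> l2 \<le> real p + 2 \<and>
              (\<forall>x\<in>#M. 0 \<le> x \<and> x \<le> 4))"
proof -
  have q: "q1 \<ge> 2" "q2 \<ge> 2" "p \<ge> 6" using assms by auto
  have q3: "q1 \<ge> 2" "q2 \<ge> 2" "p \<ge> 3" using assms by auto
  define n where "n = ckc_n p q1 q2"
  define L where "L = ckc_laplacian p q1 q2"
  have Lc: "L \<in> carrier_mat n n" unfolding L_def n_def by (rule lap_carrier)
  have Ls: "transpose_mat L = L" unfolding L_def by (rule lap_sym[OF q3])
  from spectral_real_sym[OF Lc Ls] obtain U D where U: "U \<in> carrier_mat n n" and D: "D \<in> carrier_mat n n"
    and dD: "diagonal_mat D" and UtU: "transpose_mat U * U = 1\<^sub>m n" and LUD: "L = U * D * transpose_mat U"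
    by blast
  have S: "sdecomp (ckc_n p q1 q2) (ckc_laplacian p q1 q2) U D"
    unfolding sdecomp_def using U D dD UtU LUD unfolding L_def n_def by auto
  have UUt: "U * transpose_mat U = 1\<^sub>m n"
    by (rule mat_mult_left_right_inverse[OF _ U UtU]) (insert U, simp)
  define es where "es = diag_mat D"
  have les: "length es = n" unfolding es_def diag_mat_def using D by simp
  have esi: "es ! i = D $$ (i,i)" if "i < n" for i unfolding es_def diag_mat_def using D that by simp
  have ut: "upper_triangular D" using dD D unfolding upper_triangular_def diagonal_mat_def by auto
  have sim: "similar_mat L D"
    unfolding similar_mat_def similar_mat_wit_def
    by (rule exI[of _ U], rule exI[of _ "transpose_mat U"]) (use U D Lc UUt UtU LUD in \<open>auto simp: Let_def\<close>)
  have cp: "char_poly L = (\<Prod>a\<leftarrow>es. [:- a, 1:])"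
    unfolding char_poly_similar[OF sim] es_def by (rule char_poly_upper_triangular[OF D ut])
  define e where "e = (\<lambda>i. D $$ (i,i))"
  define I4 where "I4 = {i. i < n \<and> e i \<le> 4}"
  define Ip where "Ip = {i. i < n \<and> e i = real p}"
  define Ig where "Ig = {i. i < n \<and> e i > real p}"
  define Ile where "Ile = {i. i < n \<and> e i \<le> real p}"
  define Ige where "Ige = {i. i < n \<and> e i \<ge> real p}"
  have c4: "q1 + q2 - 1 \<le> card I4" using app_le4[OF q S] unfolding I4_def e_def n_def .
  have cle: "n - 2 \<le> card Ile" using app_lep[OF q S] unfolding Ile_def e_def n_def .
  have cge: "p - 1 \<le> card Ige" using app_gep[OF q S] unfolding Ige_def e_def n_def .
  have cg: "2 \<le> card Ig" using app_gtp[OF q S] unfolding Ig_def e_def n_def .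
  have fin: "finite I4" "finite Ip" "finite Ig" "finite Ile" "finite Ige"
    unfolding I4_def Ip_def Ig_def Ile_def Ige_def by auto
  have "card Ile + card Ig = card (Ile \<union> Ig)"
    using fin by (intro card_Un_disjoint[symmetric]) (auto simp: Ile_def Ig_def)
  also have "Ile \<union> Ig = {..<n}" unfolding Ile_def Ig_def by auto
  finally have e1: "card Ile + card Ig = n" by simp
  have "Ige = Ip \<union> Ig" unfolding Ige_def Ip_def Ig_def by auto
  hence e2: "card Ige = card Ip + card Ig"
    using fin by (simp add: card_Un_disjoint Ip_def Ig_def disjoint_iff)
  have d1: "I4 \<inter> Ip = {}" "I4 \<inter> Ig = {}" "Ip \<inter> Ig = {}"
    using q unfolding I4_def Ip_def Ig_def by auto
  have cu: "card (I4 \<union> Ip \<union> Ig) = card I4 + card Ip + card Ig"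
    using fin d1 by (simp add: card_Un_disjoint Int_Un_distrib2)
  have sub: "I4 \<union> Ip \<union> Ig \<subseteq> {..<n}" unfolding I4_def Ip_def Ig_def by auto
  have "card (I4 \<union> Ip \<union> Ig) \<le> n" using card_mono[OF _ sub] by simp
  have nval: "n = p + q1 + q2 - 2" unfolding n_def ckc_n_def ..
  have cIg: "card Ig = 2" using e1 cle cg q nval by linarith
  have cIp: "card Ip = p - 3" using e2 cge cIg c4 cu \<open>card (I4 \<union> Ip \<union> Ig) \<le> n\<close> q nval by linarith
  have cover: "I4 \<union> Ip \<union> Ig = {..<n}"
    by (rule card_seteq) (use sub cu cIg cIp c4 \<open>card (I4 \<union> Ip \<union> Ig) \<le> n\<close> q nval in auto)
  have allc: "e i \<le> 4 \<or> e i = real p \<or> e i > real p" if "i < n" for i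
    using cover that unfolding I4_def Ip_def Ig_def by auto
  have setes: "\<exists>i<n. x = e i" if "x \<in> set es" for x
    using that les esi unfolding e_def by (metis in_set_conv_nth)
  have bnd: "0 \<le> x \<and> x \<le> real p + 2" if "x \<in> set es" for x
    using setes[OF that] app_all_le[OF q S] app_all_ge[OF q S] unfolding e_def n_def by auto
  have excl: "\<forall>x\<in>set es. (x = real p \<and> \<not> x > real p \<and> \<not> x \<le> 4) \<or> (\<not> x = real p \<and> x > real p \<and> \<not> x \<le> 4)
      \<or> (\<not> x = real p \<and> \<not> x > real p \<and> x \<le> 4)"
  proof
    fix x assume "x \<in> set es"
    then obtain i where "i < n" "x = e i" using setes by blast
    thus "(x = real p \<and> \<not> x > real p \<and> \<not> x \<le> 4) \<or> (\<not> x = real p \<and> x > real p \<and> \<not> x \<le> 4)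
      \<or> (\<not> x = real p \<and> \<not> x > real p \<and> x \<le> 4)" using allc[of i] q by auto
  qed
  have lenf: "length (filter P es) = card {i. i < n \<and> P (e i)}" for P
    unfolding length_filter_conv_card les using esi unfolding e_def
    by (metis (no_types, lifting))
  have rep: "mset (filter (\<lambda>x. x = real p) es) = replicate_mset (p - 3) (real p)"
  proof -
    have "length (filter (\<lambda>x. x = real p) es) = p - 3" using lenf[of "\<lambda>x. x = real p"] cIp unfolding Ip_def by simp
    moreover have "replicate (length (filter (\<lambda>x. x = real p) es)) (real p) = filter (\<lambda>x. x = real p) es"
      by (rule replicate_length_same) auto
    ultimately show ?thesis by (metis mset_replicate)
  qed
  have "length (filter (\<lambda>x. x > real p) es) = 2" using lenf[of "\<lambda>x. x > real p"] cIg unfolding Ig_def by simp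
  then obtain l1 l2 where l12: "filter (\<lambda>x. x > real p) es = [l1, l2]"
    by (metis (no_types, lifting) One_nat_def Suc_1 length_0_conv length_Suc_conv)
  have "l1 \<in> set (filter (\<lambda>x. x > real p) es)" "l2 \<in> set (filter (\<lambda>x. x > real p) es)"
    unfolding l12 by auto
  hence l1: "l1 \<in> set es" "l1 > real p" and l2: "l2 \<in> set es" "l2 > real p" by auto
  define M where "M = mset (filter (\<lambda>x. x \<le> 4) es)"
  have M: "\<forall>x\<in>#M. 0 \<le> x \<and> x \<le> 4" unfolding M_def using bnd by auto
  have "mset es = replicate_mset (p - 3) (real p) + {#l1, l2#} + M"
    unfolding mset_split3[OF excl] rep l12 M_def by simp
  thus ?thesis using cp l1 l2 bnd M unfolding L_def by blast
qed

end
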